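(* Let $M$ be a finite matroid having at least one circuit, and let $\ell$ be the size of its largest circuit. Then $\mathrm{bd}(M)\le\ell^2$.
   Context: For a rooted tree $T$, $\|T\|$ is its number of edges and its depth is the number of edges of a longest root-to-leaf path. A depth-decomposition of a finite matroid $M$ (rank function $r$) is a pair $(T,f)$ with $T$ a rooted tree and $f:M\to V(T)$ such that (1) $r(M)=\|T\|$ and (2) $r(X)\le\|T^*(X)\|$ for every $X\subseteq M$, where $T^*(X)$ is the union of the paths from the root to all vertices of $f(X)$. The branch-depth $\mathrm{bd}(M)$ is the minimum depth of $T$ over all depth-decompositions $(T,f)$ of $M$. *)

theory Defs
  imports Main
begin

definition matroid :: "'a set \<Rightarrow> ('a set \<Rightarrow> bool) \<Rightarrow> bool" where
  "matroid E indep \<longleftrightarrow>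
     finite E \<and> indep {} \<and>
     (\<forall>X. indep X \<longrightarrow> X \<subseteq> E) \<and>
     (\<forall>X Y. indep Y \<and> X \<subseteq> Y \<longrightarrow> indep X) \<and>
     (\<forall>X Y. indep X \<and> indep Y \<and> card X < card Y \<longrightarrow>
        (\<exists>y\<in>Y - X. indep (insert y X)))"

definition mrank :: "('a set \<Rightarrow> bool) \<Rightarrow> 'a set \<Rightarrow> nat" where
  "mrank indep X = Max {card I | I. I \<subseteq> X \<and> indep I}"

definition circuit :: "'a set \<Rightarrow> ('a set \<Rightarrow> bool) \<Rightarrow> 'a set \<Rightarrow> bool" where
  "circuit E indep C \<longleftrightarrow> C \<subseteq> E \<and> \<not> indep C \<and> (\<forall>x\<in>C. indep (C - {x}))"

definition max_circuit_size :: "'a set \<Rightarrow> ('a set \<Rightarrow> bool) \<Rightarrow> nat" where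
  "max_circuit_size E indep = Max {card C | C. circuit E indep C}"

text \<open>A rooted tree given by a finite vertex set V, a root, and a parent map;
  every vertex reaches the root by iterating the parent map.  Its edges are
  the pairs {v, parent v} for v \<noteq> root.\<close>
definition rooted_tree :: "'v set \<Rightarrow> 'v \<Rightarrow> ('v \<Rightarrow> 'v) \<Rightarrow> bool" where
  "rooted_tree V root par \<longleftrightarrow>
     finite V \<and> root \<in> V \<and>
     (\<forall>v\<in>V. v \<noteq> root \<longrightarrow> par v \<in> V) \<and>
     (\<forall>v\<in>V. \<exists>n. (par ^^ n) v = root)"

definition tdist :: "'v \<Rightarrow> ('v \<Rightarrow> 'v) \<Rightarrow> 'v \<Rightarrow> nat" where
  "tdist root par v = (LEAST n. (par ^^ n) v = root)"

definition tedges :: "'v set \<Rightarrow> nat" where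
  "tedges V = card V - 1"

definition tdepth :: "'v set \<Rightarrow> 'v \<Rightarrow> ('v \<Rightarrow> 'v) \<Rightarrow> nat" where
  "tdepth V root par = Max (tdist root par ` V)"

definition root_path :: "'v \<Rightarrow> ('v \<Rightarrow> 'v) \<Rightarrow> 'v \<Rightarrow> 'v set" where
  "root_path root par v = {(par ^^ k) v | k. k \<le> tdist root par v}"

text \<open>Number of edges of T*(X), the union of the root paths to the vertices f(X)
  (a subtree containing the root when X is nonempty; empty when X is empty).\<close>
definition tstar_edges :: "'v \<Rightarrow> ('v \<Rightarrow> 'v) \<Rightarrow> ('a \<Rightarrow> 'v) \<Rightarrow> 'a set \<Rightarrow> nat" where
  "tstar_edges root par f X = card (\<Union>x\<in>X. root_path root par (f x)) - 1"

definition depth_decomposition ::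
  "'a set \<Rightarrow> ('a set \<Rightarrow> bool) \<Rightarrow> 'v set \<Rightarrow> 'v \<Rightarrow> ('v \<Rightarrow> 'v) \<Rightarrow> ('a \<Rightarrow> 'v) \<Rightarrow> bool" where
  "depth_decomposition E indep V root par f \<longleftrightarrow>
     rooted_tree V root par \<and>
     (\<forall>x\<in>E. f x \<in> V) \<and>
     mrank indep E = tedges V \<and>
     (\<forall>X. X \<subseteq> E \<longrightarrow> mrank indep X \<le> tstar_edges root par f X)"

text \<open>Branch-depth: minimum depth over all depth-decompositions.  Tree vertices
  are taken to be natural numbers (every finite tree has such a copy).\<close>
definition branch_depth :: "'a set \<Rightarrow> ('a set \<Rightarrow> bool) \<Rightarrow> nat" where
  "branch_depth E indep =
     Min {tdepth V root par | (V :: nat set) root par f.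
            depth_decomposition E indep V root par f}"

end

theory Submission
  imports Defs "HOL-Library.Countable"
begin


locale mat =
  fixes E :: "'a set" and I :: "'a set \<Rightarrow> bool"
  assumes m: "matroid E I"
begin

abbreviation r where "r \<equiv> mrank I"

lemma finE: "finite E" using m unfolding matroid_def by blast
lemma I_empty: "I {}" using m unfolding matroid_def by blast
lemma I_sub: "I X \<Longrightarrow> X \<subseteq> E" using m unfolding matroid_def by blast
lemma I_mono: "I Y \<Longrightarrow> X \<subseteq> Y \<Longrightarrow> I X" using m unfolding matroid_def by blast
lemma I_aug: "I X \<Longrightarrow> I Y \<Longrightarrow> card X < card Y \<Longrightarrow> \<exists>y\<in>Y - X. I (insert y X)"
  using m unfolding matroid_def by blast
lemma I_fin: "I X \<Longrightarrow> finite X" using I_sub finE finite_subset by blast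

lemma rank_set_fin: "X \<subseteq> E \<Longrightarrow> finite {card J |J. J \<subseteq> X \<and> I J}"
proof -
  assume "X \<subseteq> E"
  have "{card J |J. J \<subseteq> X \<and> I J} \<subseteq> card ` Pow X" by auto
  moreover have "finite X" using \<open>X \<subseteq> E\<close> finE finite_subset by blast
  ultimately show ?thesis using finite_subset by blast
qed

lemma rank_ex: "X \<subseteq> E \<Longrightarrow> \<exists>J. J \<subseteq> X \<and> I J \<and> card J = r X"
proof -
  assume X: "X \<subseteq> E"
  have ne: "{card J |J. J \<subseteq> X \<and> I J} \<noteq> {}" using I_empty by blast
  have "r X \<in> {card J |J. J \<subseteq> X \<and> I J}"
    unfolding mrank_def using Max_in[OF rank_set_fin[OF X] ne] .
  thus ?thesis by auto
qed

lemma rank_ge: "X \<subseteq> E \<Longrightarrow> J \<subseteq> X \<Longrightarrow> I J \<Longrightarrow> card J \<le> r X"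
  unfolding mrank_def by (rule Max_ge[OF rank_set_fin]) auto

lemma rank_le_card: "X \<subseteq> E \<Longrightarrow> r X \<le> card X"
proof -
  assume X: "X \<subseteq> E"
  obtain J where "J \<subseteq> X" "I J" "card J = r X" using rank_ex[OF X] by blast
  moreover have "finite X" using X finE finite_subset by blast
  ultimately show ?thesis using card_mono[of X J] by simp
qed

lemma rank_mono: "X \<subseteq> Y \<Longrightarrow> Y \<subseteq> E \<Longrightarrow> r X \<le> r Y"
proof -
  assume a: "X \<subseteq> Y" "Y \<subseteq> E"
  have XE: "X \<subseteq> E" using a by (rule subset_trans)
  obtain J where J: "J \<subseteq> X" "I J" "card J = r X" using rank_ex[OF XE] by blast
  have "J \<subseteq> Y" using J a by blast
  from rank_ge[OF a(2) this J(2)] J(3) show ?thesis by simp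
qed

lemma indep_rank: "I X \<Longrightarrow> r X = card X"
proof -
  assume a: "I X"
  have X: "X \<subseteq> E" using I_sub a by blast
  show ?thesis using rank_ge[OF X _ a] rank_le_card[OF X] by simp
qed

lemma rank_indep: "X \<subseteq> E \<Longrightarrow> r X = card X \<Longrightarrow> I X"
proof -
  assume X: "X \<subseteq> E" "r X = card X"
  obtain J where J: "J \<subseteq> X" "I J" "card J = r X" using rank_ex X by blast
  have "finite X" using X finE finite_subset by blast
  hence "J = X" using J X card_subset_eq[of X J] by simp
  thus ?thesis using J by simp
qed

lemma dep_rank: "X \<subseteq> E \<Longrightarrow> \<not> I X \<Longrightarrow> r X < card X"
proof -
  assume a: "X \<subseteq> E" "\<not> I X"
  hence "r X \<noteq> card X" using rank_indep by blast
  thus ?thesis using rank_le_card[OF a(1)] by simp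
qed

lemma extend: "I J \<Longrightarrow> J \<subseteq> X \<Longrightarrow> X \<subseteq> E \<Longrightarrow> \<exists>K. J \<subseteq> K \<and> K \<subseteq> X \<and> I K \<and> card K = r X"
proof (induction "r X - card J" arbitrary: J)
  case 0
  have "card J \<le> r X" using rank_ge[OF 0(4) 0(3) 0(2)] .
  hence "card J = r X" using 0(1) by simp
  thus ?case using 0 by blast
next
  case (Suc n)
  obtain B where B: "B \<subseteq> X" "I B" "card B = r X" using rank_ex[OF Suc(5)] by blast
  have lt: "card J < card B" using Suc(2) B(3) by linarith
  obtain y where y: "y \<in> B - J" "I (insert y J)" using I_aug[OF Suc(3) B(2) lt] by blast
  have fJ: "finite J" using I_fin[OF Suc(3)] .
  have n: "n = r X - card (insert y J)" using Suc(2) y(1) fJ by simp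
  have sub: "insert y J \<subseteq> X" using y(1) B(1) Suc(4) by blast
  obtain K where K: "insert y J \<subseteq> K" "K \<subseteq> X" "I K" "card K = r X"
    using Suc(1)[OF n y(2) sub Suc(5)] by blast
  have "J \<subseteq> K" using K(1) by blast
  thus ?case using K by blast
qed

lemma submod: "X \<subseteq> E \<Longrightarrow> Y \<subseteq> E \<Longrightarrow> r (X \<union> Y) + r (X \<inter> Y) \<le> r X + r Y"
proof -
  assume X: "X \<subseteq> E" and Y: "Y \<subseteq> E"
  have XY: "X \<inter> Y \<subseteq> E" "X \<union> Y \<subseteq> E" using X Y by auto
  obtain J where J: "J \<subseteq> X \<inter> Y" "I J" "card J = r (X \<inter> Y)" using rank_ex[OF XY(1)] by blast
  have JXY: "J \<subseteq> X \<union> Y" using J(1) by blast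
  obtain K where K: "J \<subseteq> K" "K \<subseteq> X \<union> Y" "I K" "card K = r (X \<union> Y)"
    using extend[OF J(2) JXY XY(2)] by blast
  have fK: "finite K" using I_fin[OF K(3)] .
  have i1: "I (K \<inter> X)" using I_mono[OF K(3)] by blast
  have i2: "I (K \<inter> Y)" using I_mono[OF K(3)] by blast
  have c1: "card (K \<inter> X) \<le> r X" using rank_ge[OF X _ i1] by blast
  have c2: "card (K \<inter> Y) \<le> r Y" using rank_ge[OF Y _ i2] by blast
  have c3: "card (K \<inter> X) + card (K \<inter> Y) = card ((K \<inter> X) \<union> (K \<inter> Y)) + card ((K \<inter> X) \<inter> (K \<inter> Y))"
    using card_Un_Int[of "K \<inter> X" "K \<inter> Y"] fK by simp
  have e: "(K \<inter> X) \<union> (K \<inter> Y) = K" using K(2) by blast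
  have JK: "J \<subseteq> (K \<inter> X) \<inter> (K \<inter> Y)" using J(1) K(1) by blast
  have c4: "card J \<le> card ((K \<inter> X) \<inter> (K \<inter> Y))"
    using card_mono[OF _ JK] fK by simp
  show ?thesis using c1 c2 c3 c4 e J(3) K(4) by simp
qed

lemma subadd: "X \<subseteq> E \<Longrightarrow> Y \<subseteq> E \<Longrightarrow> r (X \<union> Y) \<le> r X + r Y"
  using submod[of X Y] by linarith

lemma rank_empty: "r {} = 0" using indep_rank I_empty by simp

lemma rank_insert: "X \<subseteq> E \<Longrightarrow> e \<in> E \<Longrightarrow> r (insert e X) \<le> r X + 1"
proof -
  assume "X \<subseteq> E" "e \<in> E"
  hence "r ({e} \<union> X) \<le> r {e} + r X" using subadd[of "{e}" X] by blast
  moreover have "r {e} \<le> 1" using rank_le_card[of "{e}"] \<open>e \<in> E\<close> by simp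
  ultimately show ?thesis by simp
qed

definition spn :: "'a set \<Rightarrow> 'a \<Rightarrow> bool" where
  "spn S p \<longleftrightarrow> r (insert p S) = r S"

lemma spn_mono: "spn A p \<Longrightarrow> A \<subseteq> S \<Longrightarrow> S \<subseteq> E \<Longrightarrow> p \<in> E \<Longrightarrow> spn S p"
proof -
  assume a: "spn A p" "A \<subseteq> S" "S \<subseteq> E" "p \<in> E"
  have pA: "insert p A \<subseteq> E" using a by blast
  have 1: "r (S \<union> insert p A) + r (S \<inter> insert p A) \<le> r S + r (insert p A)"
    using submod[OF a(3) pA] .
  have 2: "S \<union> insert p A = insert p S" using a by blast
  have 3: "r A \<le> r (S \<inter> insert p A)" using rank_mono[of A "S \<inter> insert p A"] a(2,3) by blast
  have 4: "r S \<le> r (insert p S)" using rank_mono[of S "insert p S"] a(3,4) by blast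
  show ?thesis using 1[unfolded 2] 3 4 a(1) unfolding spn_def by linarith
qed

lemma spn_trans: "spn S p \<Longrightarrow> spn (insert p S) z \<Longrightarrow> S \<subseteq> E \<Longrightarrow> p \<in> E \<Longrightarrow> z \<in> E \<Longrightarrow> spn S z"
proof -
  assume a: "spn S p" "spn (insert p S) z" "S \<subseteq> E" "p \<in> E" "z \<in> E"
  have "r (insert z S) \<le> r (insert z (insert p S))" using rank_mono[of "insert z S" "insert z (insert p S)"] a(3,4,5) by blast
  also have "\<dots> = r S" using a(1,2) unfolding spn_def by simp
  moreover have "r S \<le> r (insert z S)" by (rule rank_mono) (use a in auto)
  ultimately show ?thesis unfolding spn_def by simp
qed

lemma not_spn_indep: "I S \<Longrightarrow> p \<in> E \<Longrightarrow> p \<notin> S \<Longrightarrow> \<not> spn S p \<Longrightarrow> I (insert p S)"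
proof -
  assume a: "I S" "p \<in> E" "p \<notin> S" "\<not> spn S p"
  have S: "S \<subseteq> E" using a I_sub by blast
  have S': "insert p S \<subseteq> E" using S a(2) by blast
  have "r S \<le> r (insert p S)" using rank_mono[OF _ S'] by blast
  hence 1: "r (insert p S) = r S + 1" using rank_insert[OF S a(2)] a(4) unfolding spn_def by linarith
  have 2: "card (insert p S) = card S + 1" using a(3) I_fin[OF a(1)] by simp
  show ?thesis using rank_indep[OF S'] 1 2 indep_rank[OF a(1)] by simp
qed

lemma spn_dep: "I S \<Longrightarrow> p \<in> E \<Longrightarrow> p \<notin> S \<Longrightarrow> spn S p \<Longrightarrow> \<not> I (insert p S)"
proof
  assume a: "I S" "p \<in> E" "p \<notin> S" "spn S p" "I (insert p S)"
  have "r (insert p S) = card S + 1" using indep_rank[OF a(5)] a(3) I_fin[OF a(1)] by simp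
  thus False using a(4) indep_rank[OF a(1)] unfolding spn_def by simp
qed

end


context mat begin

abbreviation circ where "circ C \<equiv> circuit E I C"

lemma circ_sub: "circ C \<Longrightarrow> C \<subseteq> E" unfolding circuit_def by blast
lemma circ_dep: "circ C \<Longrightarrow> \<not> I C" unfolding circuit_def by blast
lemma circ_minus: "circ C \<Longrightarrow> c \<in> C \<Longrightarrow> I (C - {c})" unfolding circuit_def by blast
lemma circ_fin: "circ C \<Longrightarrow> finite C" using circ_sub finE finite_subset by blast
lemma circ_ne: "circ C \<Longrightarrow> C \<noteq> {}" using circ_dep I_empty by blast

lemma circ_card_pos: "circ C \<Longrightarrow> card C \<ge> 1"
  using circ_ne circ_fin by (simp add: Suc_leI card_gt_0_iff)

lemma circ_rank: "circ C \<Longrightarrow> r C = card C - 1"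
proof -
  assume c: "circ C"
  obtain x where x: "x \<in> C" using circ_ne[OF c] by blast
  have "card (C - {x}) = card C - 1" using x circ_fin[OF c] by simp
  moreover have "card (C - {x}) \<le> r C" using rank_ge[OF circ_sub[OF c] _ circ_minus[OF c x]] by blast
  moreover have "r C < card C" using dep_rank[OF circ_sub[OF c] circ_dep[OF c]] .
  ultimately show ?thesis by linarith
qed

lemma circ_spn: "circ C \<Longrightarrow> c \<in> C \<Longrightarrow> spn (C - {c}) c"
proof -
  assume a: "circ C" "c \<in> C"
  have "insert c (C - {c}) = C" using a by blast
  moreover have "r (C - {c}) = card C - 1"
    using indep_rank[OF circ_minus[OF a]] a circ_fin[OF a(1)] by simp
  ultimately show ?thesis using circ_rank[OF a(1)] unfolding spn_def by simp
qed

lemma circ_spn_set: "circ W \<Longrightarrow> p \<in> W \<Longrightarrow> W - {p} \<subseteq> S \<Longrightarrow> S \<subseteq> E \<Longrightarrow> spn S p"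
  using spn_mono[OF circ_spn] circ_sub by blast

lemma circ_incomp: "circ C1 \<Longrightarrow> circ C2 \<Longrightarrow> C1 \<subseteq> C2 \<Longrightarrow> C1 = C2"
proof (rule ccontr)
  assume a: "circ C1" "circ C2" "C1 \<subseteq> C2" "C1 \<noteq> C2"
  then obtain c where c: "c \<in> C2" "c \<notin> C1" by blast
  have "C1 \<subseteq> C2 - {c}" using a c by blast
  hence "I C1" using I_mono[OF circ_minus[OF a(2) c(1)]] by blast
  thus False using circ_dep[OF a(1)] by blast
qed

lemma dep_circ: "X \<subseteq> E \<Longrightarrow> \<not> I X \<Longrightarrow> \<exists>C. C \<subseteq> X \<and> circ C"
proof (induction "card X" arbitrary: X rule: less_induct)
  case less
  show ?case
  proof (cases "\<forall>x\<in>X. I (X - {x})")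
    case True
    hence "circ X" unfolding circuit_def using less by blast
    thus ?thesis by blast
  next
    case False
    then obtain x where x: "x \<in> X" "\<not> I (X - {x})" by blast
    have fX: "finite X" using less(2) finE finite_subset by blast
    have lt: "card (X - {x}) < card X" using card_Diff1_less[OF fX x(1)] .
    have sub: "X - {x} \<subseteq> E" using less(2) by blast
    obtain C where "C \<subseteq> X - {x}" "circ C" using less(1)[OF lt sub x(2)] by blast
    thus ?thesis by blast
  qed
qed

lemma fund: "I S \<Longrightarrow> p \<in> E \<Longrightarrow> p \<notin> S \<Longrightarrow> \<not> I (insert p S) \<Longrightarrow> \<exists>W. circ W \<and> p \<in> W \<and> W \<subseteq> insert p S"
proof -
  assume a: "I S" "p \<in> E" "p \<notin> S" "\<not> I (insert p S)"
  have sub: "insert p S \<subseteq> E" using I_sub[OF a(1)] a(2) by blast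
  obtain W where W: "W \<subseteq> insert p S" "circ W" using dep_circ[OF sub a(4)] by blast
  have "p \<in> W"
  proof (rule ccontr)
    assume "p \<notin> W"
    hence "W \<subseteq> S" using W by blast
    thus False using I_mono[OF a(1)] circ_dep[OF W(2)] by blast
  qed
  thus ?thesis using W by blast
qed

lemma spn_circ: "S \<subseteq> E \<Longrightarrow> p \<in> E \<Longrightarrow> p \<notin> S \<Longrightarrow> spn S p \<Longrightarrow> \<exists>W. circ W \<and> p \<in> W \<and> W \<subseteq> insert p S"
proof -
  assume a: "S \<subseteq> E" "p \<in> E" "p \<notin> S" "spn S p"
  obtain B where B: "B \<subseteq> S" "I B" "card B = r S" using rank_ex[OF a(1)] by blast
  have pB: "p \<notin> B" using B a by blast
  have sub: "insert p B \<subseteq> insert p S" using B by blast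
  have sub2: "insert p S \<subseteq> E" using a by blast
  have "r (insert p B) \<le> r (insert p S)" using rank_mono[OF sub sub2] .
  hence "r (insert p B) \<le> card B" using a(4) B unfolding spn_def by simp
  moreover have "card (insert p B) = card B + 1" using pB I_fin[OF B(2)] by simp
  ultimately have "\<not> I (insert p B)" using indep_rank by fastforce
  then obtain W where "circ W" "p \<in> W" "W \<subseteq> insert p B" using fund[OF B(2) a(2) pB] by blast
  thus ?thesis using sub by blast
qed

lemma strong_elim:
  assumes Z: "circ Z" and Y: "circ Y" and p: "p \<in> Z" "p \<in> Y" and z: "z \<in> Z" "z \<notin> Y"
  shows "\<exists>W. circ W \<and> z \<in> W \<and> W \<subseteq> (Z \<union> Y) - {p}"
proof -
  define S where "S = (Z \<union> Y) - {p, z}"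
  have SE: "S \<subseteq> E" unfolding S_def using circ_sub[OF Z] circ_sub[OF Y] by blast
  have pE: "p \<in> E" using p circ_sub[OF Y] by blast
  have zE: "z \<in> E" using z circ_sub[OF Z] by blast
  have zp: "z \<noteq> p" using z p by blast
  have 1: "spn S p" using circ_spn_set[OF Y p(2) _ SE] z(2) unfolding S_def by blast
  have pSE: "insert p S \<subseteq> E" using SE pE by blast
  have 2: "spn (insert p S) z" using circ_spn_set[OF Z z(1) _ pSE] unfolding S_def by blast
  have 3: "spn S z" using spn_trans[OF 1 2 SE pE zE] .
  have zS: "z \<notin> S" unfolding S_def by blast
  obtain W where "circ W" "z \<in> W" "W \<subseteq> insert z S" using spn_circ[OF SE zE zS 3] by blast
  moreover have "insert z S \<subseteq> (Z \<union> Y) - {p}" unfolding S_def using z zp by blast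
  ultimately show ?thesis by blast
qed

lemma trans_circ:
  "circ C1 \<Longrightarrow> circ C2 \<Longrightarrow> y \<in> C1 \<Longrightarrow> y \<in> C2 \<Longrightarrow> x \<in> C1 \<Longrightarrow> z \<in> C2 \<Longrightarrow> \<exists>W. circ W \<and> x \<in> W \<and> z \<in> W"
proof (induction "card (C1 \<union> C2)" arbitrary: C1 C2 y x z rule: less_induct)
  case less
  show ?case
  proof (cases "x \<in> C2 \<or> z \<in> C1")
    case True
    thus ?thesis using less by blast
  next
    case False
    obtain C3 where C3: "circ C3" "x \<in> C3" "C3 \<subseteq> (C1 \<union> C2) - {y}"
      using strong_elim[OF less(2) less(3) less(4) less(5) less(6)] False by blast
    show ?thesis
    proof (cases "z \<in> C3")
      case True thus ?thesis using C3 by blast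
    next
      case zC3: False
      have "\<not> C3 \<subseteq> C1"
      proof
        assume "C3 \<subseteq> C1"
        hence "C3 = C1" using circ_incomp[OF C3(1) less(2)] by blast
        thus False using C3(3) less(4) by blast
      qed
      then obtain w where w: "w \<in> C3" "w \<notin> C1" by blast
      have wC2: "w \<in> C2" using w C3(3) by blast
      obtain C4 where C4: "circ C4" "z \<in> C4" "C4 \<subseteq> (C2 \<union> C3) - {w}"
        using strong_elim[OF less(3) C3(1) wC2 w(1) less(7) zC3] by blast
      have "\<not> C4 \<subseteq> C2"
      proof
        assume "C4 \<subseteq> C2"
        hence "C4 = C2" using circ_incomp[OF C4(1) less(3)] by blast
        thus False using C4(3) wC2 by blast
      qed
      then obtain v where v: "v \<in> C4" "v \<notin> C2" by blast
      have vC1: "v \<in> C1" using v C4(3) C3(3) by blast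
      have sub: "C1 \<union> C4 \<subseteq> (C1 \<union> C2) - {w}" using C4(3) C3(3) w by blast
      have fin: "finite (C1 \<union> C2)" using circ_fin[OF less(2)] circ_fin[OF less(3)] by blast
      have "card (C1 \<union> C4) \<le> card ((C1 \<union> C2) - {w})" using card_mono[OF _ sub] fin by blast
      also have "\<dots> < card (C1 \<union> C2)" using card_Diff1_less[OF fin] wC2 by blast
      finally have lt: "card (C1 \<union> C4) < card (C1 \<union> C2)" .
      show ?thesis using less(1)[OF lt less(2) C4(1) vC1 v(1) less(6) C4(2)] .
    qed
  qed
qed

definition sep :: "'a set \<Rightarrow> bool" where
  "sep A \<longleftrightarrow> (\<forall>Y. circ Y \<longrightarrow> Y \<subseteq> A \<or> Y \<subseteq> E - A)"

lemma sep_rank: "A \<subseteq> E \<Longrightarrow> sep A \<Longrightarrow> r E = r A + r (E - A)"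
proof -
  assume A: "A \<subseteq> E" "sep A"
  have B: "E - A \<subseteq> E" by blast
  obtain JA where JA: "JA \<subseteq> A" "I JA" "card JA = r A" using rank_ex[OF A(1)] by blast
  obtain JB where JB: "JB \<subseteq> E - A" "I JB" "card JB = r (E - A)" using rank_ex[OF B] by blast
  have sub: "JA \<union> JB \<subseteq> E" using JA JB A by blast
  have "I (JA \<union> JB)"
  proof (rule ccontr)
    assume "\<not> I (JA \<union> JB)"
    then obtain Y where Y: "Y \<subseteq> JA \<union> JB" "circ Y" using dep_circ[OF sub] by blast
    hence "Y \<subseteq> A \<or> Y \<subseteq> E - A" using A(2) unfolding sep_def by blast
    hence "Y \<subseteq> JA \<or> Y \<subseteq> JB" using Y(1) JA(1) JB(1) by blast
    thus False using I_mono[OF JA(2)] I_mono[OF JB(2)] circ_dep[OF Y(2)] by blast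
  qed
  hence "card (JA \<union> JB) \<le> r E" using rank_ge[OF _ sub] by blast
  moreover have "card (JA \<union> JB) = card JA + card JB"
    using card_Un_disjoint[OF I_fin[OF JA(2)] I_fin[OF JB(2)]] JA JB by blast
  moreover have "r E \<le> r A + r (E - A)" using subadd[OF A(1) B] A(1) by (simp add: Un_absorb1)
  ultimately show ?thesis using JA JB by linarith
qed

lemma conn_circ:
  assumes C: "circ C" and nosep: "\<forall>A. A \<subseteq> E \<and> A \<noteq> {} \<and> A \<noteq> E \<longrightarrow> \<not> sep A" and d: "d \<in> E"
  shows "\<exists>W. circ W \<and> d \<in> W \<and> W \<inter> C \<noteq> {}"
proof -
  define A where "A = {e. \<exists>W. circ W \<and> e \<in> W \<and> W \<inter> C \<noteq> {}}"
  have AE: "A \<subseteq> E" unfolding A_def using circ_sub by blast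
  have CA: "C \<subseteq> A" unfolding A_def using C circ_ne[OF C] by blast
  have sA: "sep A" unfolding sep_def
  proof (intro allI impI)
    fix Y assume Y: "circ Y"
    show "Y \<subseteq> A \<or> Y \<subseteq> E - A"
    proof (cases "Y \<inter> A = {}")
      case True thus ?thesis using circ_sub[OF Y] by blast
    next
      case False
      then obtain a where a: "a \<in> Y" "a \<in> A" by blast
      then obtain W0 where W0: "circ W0" "a \<in> W0" "W0 \<inter> C \<noteq> {}" unfolding A_def by blast
      then obtain c where c: "c \<in> W0" "c \<in> C" by blast
      have "Y \<subseteq> A"
      proof
        fix y assume y: "y \<in> Y"
        obtain W where "circ W" "c \<in> W" "y \<in> W" using trans_circ[OF W0(1) Y W0(2) a(1) c(1) y] by blast
        thus "y \<in> A" unfolding A_def using c(2) by blast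
      qed
      thus ?thesis by blast
    qed
  qed
  have "A = E" using nosep AE CA circ_ne[OF C] sA by blast
  thus ?thesis using d unfolding A_def by blast
qed

end


definition contr_I :: "'a set \<Rightarrow> ('a set \<Rightarrow> bool) \<Rightarrow> 'a set \<Rightarrow> 'a set \<Rightarrow> 'a set \<Rightarrow> bool" where
  "contr_I E I X J Y \<longleftrightarrow> Y \<subseteq> E - X \<and> I (Y \<union> J)"

definition res_I :: "('a set \<Rightarrow> bool) \<Rightarrow> 'a set \<Rightarrow> 'a set \<Rightarrow> bool" where
  "res_I I A Y \<longleftrightarrow> I Y \<and> Y \<subseteq> A"

context mat begin

lemma res_matroid: "A \<subseteq> E \<Longrightarrow> matroid A (res_I I A)"
proof -
  assume A: "A \<subseteq> E"
  have 1: "finite A" using A finE finite_subset by blast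
  have 2: "res_I I A {}" unfolding res_I_def using I_empty by blast
  have 3: "\<forall>X. res_I I A X \<longrightarrow> X \<subseteq> A" unfolding res_I_def by blast
  have 4: "\<forall>X Y. res_I I A Y \<and> X \<subseteq> Y \<longrightarrow> res_I I A X" unfolding res_I_def using I_mono by blast
  have 5: "\<forall>X Y. res_I I A X \<and> res_I I A Y \<and> card X < card Y \<longrightarrow> (\<exists>y\<in>Y - X. res_I I A (insert y X))"
  proof (intro allI impI)
    fix X Y assume a: "res_I I A X \<and> res_I I A Y \<and> card X < card Y"
    have "I X" "I Y" "card X < card Y" using a unfolding res_I_def by auto
    then obtain y where "y \<in> Y - X" "I (insert y X)" using I_aug by blast
    thus "\<exists>y\<in>Y - X. res_I I A (insert y X)" using a unfolding res_I_def by blast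
  qed
  show ?thesis unfolding matroid_def using 1 2 3 4 5 by blast
qed

lemma res_rank: "X \<subseteq> A \<Longrightarrow> mrank (res_I I A) X = r X"
proof -
  assume "X \<subseteq> A"
  hence "{card J |J. J \<subseteq> X \<and> res_I I A J} = {card J |J. J \<subseteq> X \<and> I J}"
    unfolding res_I_def by blast
  thus ?thesis unfolding mrank_def by simp
qed

lemma res_circ: "A \<subseteq> E \<Longrightarrow> circuit A (res_I I A) Y \<Longrightarrow> circ Y"
proof -
  assume A: "A \<subseteq> E" and a: "circuit A (res_I I A) Y"
  have "Y \<subseteq> A" using a unfolding circuit_def by blast
  hence "\<not> I Y" using a unfolding circuit_def res_I_def by blast
  moreover have "\<forall>x\<in>Y. I (Y - {x})" using a unfolding circuit_def res_I_def by blast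
  moreover have "Y \<subseteq> E" using a A unfolding circuit_def by blast
  ultimately show ?thesis unfolding circuit_def by blast
qed

lemma contr_matroid: "X \<subseteq> E \<Longrightarrow> J \<subseteq> X \<Longrightarrow> I J \<Longrightarrow> matroid (E - X) (contr_I E I X J)"
proof -
  assume a: "X \<subseteq> E" "J \<subseteq> X" "I J"
  have 1: "finite (E - X)" using finE by blast
  have 2: "contr_I E I X J {}" unfolding contr_I_def using a by simp
  have 3: "\<forall>Y. contr_I E I X J Y \<longrightarrow> Y \<subseteq> E - X" unfolding contr_I_def by blast
  have 4: "\<forall>Y Z. contr_I E I X J Z \<and> Y \<subseteq> Z \<longrightarrow> contr_I E I X J Y"
  proof (intro allI impI)
    fix Y Z assume b: "contr_I E I X J Z \<and> Y \<subseteq> Z"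
    have "Y \<union> J \<subseteq> Z \<union> J" using b by blast
    thus "contr_I E I X J Y" using b I_mono unfolding contr_I_def by blast
  qed
  have 5: "\<forall>Y Z. contr_I E I X J Y \<and> contr_I E I X J Z \<and> card Y < card Z \<longrightarrow> (\<exists>y\<in>Z - Y. contr_I E I X J (insert y Y))"
  proof (intro allI impI)
    fix Y Z assume b0: "contr_I E I X J Y \<and> contr_I E I X J Z \<and> card Y < card Z"
    have b: "Y \<subseteq> E - X" "I (Y \<union> J)" "Z \<subseteq> E - X" "I (Z \<union> J)" "card Y < card Z"
      using b0 unfolding contr_I_def by auto
    have fJ: "finite J" using I_fin a by blast
    have fY: "finite Y" using I_fin[OF b(2)] by simp
    have fZ: "finite Z" using I_fin[OF b(4)] by simp
    have dY: "Y \<inter> J = {}" using b a by blast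
    have dZ: "Z \<inter> J = {}" using b a by blast
    have "card (Y \<union> J) = card Y + card J" using card_Un_disjoint[OF fY fJ dY] .
    moreover have "card (Z \<union> J) = card Z + card J" using card_Un_disjoint[OF fZ fJ dZ] .
    ultimately have "card (Y \<union> J) < card (Z \<union> J)" using b by simp
    then obtain y where y: "y \<in> (Z \<union> J) - (Y \<union> J)" "I (insert y (Y \<union> J))"
      using I_aug[OF b(2) b(4)] by blast
    have "insert y (Y \<union> J) = insert y Y \<union> J" by blast
    thus "\<exists>y\<in>Z - Y. contr_I E I X J (insert y Y)" using y b unfolding contr_I_def by auto
  qed
  show ?thesis unfolding matroid_def using 1 2 3 4 5 by blast
qed

lemma contr_rank:
  assumes X: "X \<subseteq> E" and J: "J \<subseteq> X" "I J" "card J = r X" and Z: "Z \<subseteq> E - X"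
  shows "mrank (contr_I E I X J) Z = r (Z \<union> X) - r X"
proof -
  interpret c: mat "E - X" "contr_I E I X J" using contr_matroid[OF X J(1,2)] by unfold_locales
  have ZX: "Z \<union> X \<subseteq> E" using X Z by blast
  have fJ: "finite J" using I_fin J by blast
  obtain Y where Y: "Y \<subseteq> Z" "contr_I E I X J Y" "card Y = mrank (contr_I E I X J) Z"
    using c.rank_ex[OF Z] by blast
  have YJ: "I (Y \<union> J)" "Y \<inter> J = {}" using Y(2) J unfolding contr_I_def by blast+
  have fY: "finite Y" using I_fin[OF YJ(1)] by simp
  have "card (Y \<union> J) \<le> r (Z \<union> X)" using rank_ge[OF ZX _ YJ(1)] Y(1) J(1) by blast
  hence le1: "mrank (contr_I E I X J) Z \<le> r (Z \<union> X) - r X"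
    using card_Un_disjoint[OF fY fJ YJ(2)] Y(3) J(3) by simp
  have JZX: "J \<subseteq> Z \<union> X" using J by blast
  obtain K where K: "J \<subseteq> K" "K \<subseteq> Z \<union> X" "I K" "card K = r (Z \<union> X)"
    using extend[OF J(2) JZX ZX] by blast
  have KZ: "K - J \<subseteq> Z"
  proof
    fix x assume x: "x \<in> K - J"
    show "x \<in> Z"
    proof (rule ccontr)
      assume "x \<notin> Z"
      hence xX: "x \<in> X" using x K(2) by blast
      have "I (insert x J)" using I_mono[OF K(3)] x K(1) by blast
      hence "card (insert x J) \<le> r X" using rank_ge[OF X] xX J(1) by blast
      thus False using x fJ J(3) by simp
    qed
  qed
  have KJ: "(K - J) \<union> J = K" using K(1) by blast
  have "contr_I E I X J (K - J)" unfolding contr_I_def using KZ Z K(3) KJ by auto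
  hence "card (K - J) \<le> mrank (contr_I E I X J) Z" using c.rank_ge[OF Z KZ] by blast
  moreover have "card (K - J) = card K - card J" using card_Diff_subset[OF fJ K(1)] .
  ultimately show ?thesis using le1 K(4) J(3) by linarith
qed

lemma skew_sub1:
  assumes AB: "A \<subseteq> E" "B \<subseteq> E" and sk: "r (A \<union> B) = r A + r B" and B': "B' \<subseteq> B"
  shows "r (A \<union> B') = r A + r B'"
proof -
  have AB'E: "A \<union> B' \<subseteq> E" using AB B' by blast
  have 1: "r ((A \<union> B') \<union> B) + r ((A \<union> B') \<inter> B) \<le> r (A \<union> B') + r B" using submod[OF AB'E AB(2)] .
  have 2: "(A \<union> B') \<union> B = A \<union> B" using B' by blast
  have 3: "r B' \<le> r ((A \<union> B') \<inter> B)" using rank_mono[of B' "(A \<union> B') \<inter> B"] B' AB by blast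
  have B'E: "B' \<subseteq> E" using B' AB by blast
  have 4: "r (A \<union> B') \<le> r A + r B'" using subadd[OF AB(1) B'E] .
  show ?thesis using 1 2 3 4 sk by simp
qed

lemma skew_sub:
  assumes AB: "A \<subseteq> E" "B \<subseteq> E" and sk: "r (A \<union> B) = r A + r B" and A': "A' \<subseteq> A" and B': "B' \<subseteq> B"
  shows "r (A' \<union> B') = r A' + r B'"
proof -
  have 1: "r (A \<union> B') = r A + r B'" using skew_sub1[OF AB sk B'] .
  have 2: "r (B' \<union> A) = r B' + r A" using 1 by (simp add: Un_commute)
  have B'E: "B' \<subseteq> E" using B' AB by blast
  have 3: "r (B' \<union> A') = r B' + r A'" using skew_sub1[OF B'E AB(1) 2 A'] .
  thus ?thesis by (simp add: Un_commute)
qed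

lemma skew_no_cross:
  assumes AB: "A \<subseteq> E" "B \<subseteq> E" "A \<inter> B = {}" and sk: "r (A \<union> B) = r A + r B"
    and Z: "circ Z" "Z \<subseteq> A \<union> B"
  shows "Z \<subseteq> A \<or> Z \<subseteq> B"
proof (rule ccontr)
  assume "\<not> (Z \<subseteq> A \<or> Z \<subseteq> B)"
  then obtain a d where ad: "a \<in> Z" "a \<notin> B" "d \<in> Z" "d \<notin> A" by blast
  define Zd where "Zd = Z \<inter> B"
  have dZd: "d \<in> Zd" using ad Z unfolding Zd_def by blast
  have aZ: "Zd \<subseteq> Z - {a}" using ad unfolding Zd_def by blast
  have iZd: "I Zd" using I_mono[OF circ_minus[OF Z(1) ad(1)] aZ] .
  have fZd: "finite Zd" using I_fin[OF iZd] .
  have "0 < card Zd" using fZd dZd card_gt_0_iff by blast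
  hence cZd: "card Zd \<ge> 1" by simp
  have ZdB: "Zd \<subseteq> B" unfolding Zd_def by blast
  have S: "A \<union> (Zd - {d}) \<subseteq> E" using AB ZdB by blast
  have "spn (A \<union> (Zd - {d})) d" using circ_spn_set[OF Z(1) ad(3) _ S] Z(2) unfolding Zd_def by blast
  moreover have "insert d (A \<union> (Zd - {d})) = A \<union> Zd" using dZd by blast
  ultimately have "r (A \<union> Zd) = r (A \<union> (Zd - {d}))" unfolding spn_def by simp
  also have "\<dots> \<le> r A + r (Zd - {d})" using subadd[OF AB(1), of "Zd - {d}"] AB ZdB by blast
  also have "r (Zd - {d}) = card Zd - 1" using indep_rank[OF I_mono[OF iZd]] fZd dZd by simp
  finally have 1: "r (A \<union> Zd) \<le> r A + (card Zd - 1)" by simp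
  have AZd: "A \<union> Zd \<subseteq> E" using AB ZdB by blast
  have 2: "r ((A \<union> Zd) \<union> B) + r ((A \<union> Zd) \<inter> B) \<le> r (A \<union> Zd) + r B" using submod[OF AZd AB(2)] .
  have 3: "(A \<union> Zd) \<union> B = A \<union> B" using ZdB by blast
  have 4: "(A \<union> Zd) \<inter> B = Zd" using ZdB AB(3) by blast
  show False using 1 2 3 4 sk indep_rank[OF iZd] cZd by simp
qed

end


context mat begin

lemma factA:
  assumes C: "circ C" and D: "circ D" and disj: "C \<inter> D = {}" and sk: "r (C \<union> D) = r C + r D"
    and pE: "p \<in> E" and pCD: "p \<notin> C \<union> D" and nD: "\<not> spn D p" and sp: "spn (C \<union> D) p"
  shows "\<exists>u\<in>C. card C \<le> 2 * card {x \<in> C - {u}. \<not> spn ((C - {u, x}) \<union> D) p}"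
proof -
  have CE: "C \<subseteq> E" and DE: "D \<subseteq> E" using circ_sub C D by auto
  have fC: "finite C" using circ_fin[OF C] .
  define F where "F = (\<lambda>A. A \<subseteq> C \<and> spn (A \<union> D) p)"
  have FC: "F C" unfolding F_def using sp by simp
  obtain A1 where A1: "F A1" and A1min: "\<forall>A. F A \<longrightarrow> card A1 \<le> card A"
    using ex_has_least_nat[of F C card] FC by blast
  have A1C: "A1 \<subseteq> C" using A1 unfolding F_def by blast
  have fA1: "finite A1" using A1C fC finite_subset by blast
  obtain c0 where c0: "c0 \<in> C" using circ_ne[OF C] by blast
  have Fc0: "F (C - {c0})"
  proof -
    have S1: "(C - {c0}) \<union> D \<subseteq> E" using CE DE by blast
    have "spn ((C - {c0}) \<union> D) c0" using circ_spn_set[OF C c0 _ S1] by blast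
    moreover have ins: "insert c0 ((C - {c0}) \<union> D) = C \<union> D" using c0 by blast
    ultimately have e1: "r (C \<union> D) = r ((C - {c0}) \<union> D)" unfolding spn_def by simp
    have "r (insert p ((C - {c0}) \<union> D)) \<le> r (insert p (C \<union> D))"
      by (rule rank_mono) (use CE DE pE in auto)
    moreover have "r ((C - {c0}) \<union> D) \<le> r (insert p ((C - {c0}) \<union> D))"
      by (rule rank_mono) (use CE DE pE in auto)
    ultimately have "spn ((C - {c0}) \<union> D) p" using sp e1 unfolding spn_def by simp
    thus ?thesis unfolding F_def by blast
  qed
  have ltC: "card A1 < card C"
    using A1min Fc0 card_Diff1_less[OF fC c0] by fastforce
  have A1ne: "A1 \<noteq> {}" using A1 nD unfolding F_def by auto
  have claim: "\<And>a b. a \<in> C - A1 \<Longrightarrow> b \<in> A1 \<Longrightarrow> \<not> spn ((C - {a, b}) \<union> D) p"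
  proof
    fix a b assume a: "a \<in> C - A1" and b: "b \<in> A1" and s3: "spn ((C - {a, b}) \<union> D) p"
    define A3 where "A3 = C - {a, b}"
    have A3C: "A3 \<subseteq> C" unfolding A3_def by blast
    have fA3: "finite A3" using A3C fC finite_subset by blast
    have iA1: "I A1" using I_mono[OF circ_minus[OF C, of a]] a A1C by blast
    have iA3: "I A3" using I_mono[OF circ_minus[OF C, of a]] a unfolding A3_def by blast
    define U where "U = C - {a}"
    have U: "A1 \<union> A3 = U" unfolding U_def A3_def using A1C a b by blast
    have iU: "I U" using circ_minus[OF C, of a] a unfolding U_def by blast
    have r1: "r (A1 \<union> D) = card A1 + r D"
      using skew_sub[OF CE DE sk A1C order_refl] indep_rank[OF iA1] by simp
    have r3: "r (A3 \<union> D) = card A3 + r D"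
      using skew_sub[OF CE DE sk A3C order_refl] indep_rank[OF iA3] by simp
    have UC: "U \<subseteq> C" unfolding U_def by blast
    have rU: "r (U \<union> D) = card U + r D"
      using skew_sub[OF CE DE sk UC order_refl] indep_rank[OF iU] by simp
    define N where "N = A1 \<inter> A3"
    have NC: "N \<subseteq> C" unfolding N_def using A1C by blast
    have iN: "I N" using I_mono[OF iA1] unfolding N_def by blast
    have rN: "r (N \<union> D) = card N + r D"
      using skew_sub[OF CE DE sk NC order_refl] indep_rank[OF iN] by simp
    have fN: "finite N" using I_fin[OF iN] .
    have "N \<subseteq> A1 - {b}" unfolding N_def A3_def by blast
    hence "card N < card A1" using card_mono[of "A1 - {b}" N] fA1 card_Diff1_less[OF fA1 b] by fastforce
    hence nFN: "\<not> F N" using A1min by fastforce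
    hence nsN: "\<not> spn (N \<union> D) p" unfolding F_def using NC by blast
    have NDE: "N \<union> D \<subseteq> E" using NC CE DE by blast
    have "r (N \<union> D) \<le> r (insert p (N \<union> D))" by (rule rank_mono) (use NDE pE in auto)
    hence rNp: "r (insert p (N \<union> D)) = card N + r D + 1"
      using rank_insert[OF NDE pE] nsN rN unfolding spn_def by linarith
    have r1p: "r (insert p (A1 \<union> D)) = card A1 + r D" using A1 r1 unfolding F_def spn_def by simp
    have r3p: "r (insert p (A3 \<union> D)) = card A3 + r D" using s3 r3 unfolding A3_def spn_def by simp
    have UDE: "U \<union> D \<subseteq> E" using UC CE DE by blast
    have rUp: "card U + r D \<le> r (insert p (U \<union> D))"
      using rank_mono[of "U \<union> D" "insert p (U \<union> D)"] UDE pE rU by auto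
    have S1: "insert p (A1 \<union> D) \<subseteq> E" using A1C CE DE pE by blast
    have S3: "insert p (A3 \<union> D) \<subseteq> E" using A3C CE DE pE by blast
    have sm: "r (insert p (A1 \<union> D) \<union> insert p (A3 \<union> D)) + r (insert p (A1 \<union> D) \<inter> insert p (A3 \<union> D))
        \<le> r (insert p (A1 \<union> D)) + r (insert p (A3 \<union> D))" using submod[OF S1 S3] .
    have eu: "insert p (A1 \<union> D) \<union> insert p (A3 \<union> D) = insert p (U \<union> D)" using U by blast
    have ei: "insert p (A1 \<union> D) \<inter> insert p (A3 \<union> D) = insert p (N \<union> D)" unfolding N_def by blast
    have cc: "card A1 + card A3 = card U + card N"
      using card_Un_Int[OF fA1 fA3] U unfolding N_def by simp
    show False using sm eu ei cc rNp r1p r3p rUp by simp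
  qed
  define good where "good = (\<lambda>u. {x \<in> C - {u}. \<not> spn ((C - {u, x}) \<union> D) p})"
  have fgood: "\<And>u. finite (good u)" unfolding good_def using fC by simp
  show ?thesis
  proof (cases "card C \<le> 2 * card A1")
    case True
    have "A1 \<noteq> C" using ltC by auto
    hence "C - A1 \<noteq> {}" using A1C by blast
    then obtain u where u: "u \<in> C" "u \<notin> A1" by blast
    have "A1 \<subseteq> good u"
    proof
      fix x assume x: "x \<in> A1"
      have "x \<in> C - {u}" using x u A1C by blast
      thus "x \<in> good u" unfolding good_def using claim[of u x] x u by blast
    qed
    hence "card A1 \<le> card (good u)" using card_mono[OF fgood] by blast
    thus ?thesis using True u unfolding good_def by (intro bexI[of _ u]) auto
  next
    case False
    obtain u where u: "u \<in> A1" using A1ne by blast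
    have "C - A1 \<subseteq> good u"
    proof
      fix x assume x: "x \<in> C - A1"
      have "x \<in> C - {u}" using x u by blast
      moreover have "{u, x} = {x, u}" by blast
      ultimately show "x \<in> good u" unfolding good_def using claim[of x u] x u by auto
    qed
    hence "card (C - A1) \<le> card (good u)" using card_mono[OF fgood] by blast
    moreover have "card (C - A1) = card C - card A1" using card_Diff_subset[OF fA1 A1C] .
    ultimately show ?thesis using False u A1C unfolding good_def by (intro bexI[of _ u]) auto
  qed
qed

end


context mat begin

lemma bigW:
  assumes C: "circ C" and D: "circ D" and disj: "C \<inter> D = {}" and sk: "r (C \<union> D) = r C + r D"
    and pE: "p \<in> E" and pCD: "p \<notin> C \<union> D" and nC: "\<not> spn C p" and nD: "\<not> spn D p"
    and sp: "spn (C \<union> D) p"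
  shows "\<exists>W. circ W \<and> card C + card D + 2 \<le> 2 * card W"
proof -
  have CE: "C \<subseteq> E" and DE: "D \<subseteq> E" using circ_sub C D by auto
  have fC: "finite C" using circ_fin[OF C] .
  have fD: "finite D" using circ_fin[OF D] .
  obtain u where u: "u \<in> C" and gu: "card C \<le> 2 * card {x \<in> C - {u}. \<not> spn ((C - {u, x}) \<union> D) p}"
    using factA[OF C D disj sk pE pCD nD sp] by blast
  have sk': "r (D \<union> C) = r D + r C" using sk by (simp add: Un_commute)
  have sp': "spn (D \<union> C) p" using sp by (simp add: Un_commute)
  have disj': "D \<inter> C = {}" using disj by blast
  have pDC: "p \<notin> D \<union> C" using pCD by blast
  obtain v where v: "v \<in> D" and gv: "card D \<le> 2 * card {y \<in> D - {v}. \<not> spn ((D - {v, y}) \<union> C) p}"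
    using factA[OF D C disj' sk' pE pDC nC sp'] by blast
  define G1 where "G1 = {x \<in> C - {u}. \<not> spn ((C - {u, x}) \<union> D) p}"
  define G2 where "G2 = {y \<in> D - {v}. \<not> spn ((D - {v, y}) \<union> C) p}"
  define S where "S = (C - {u}) \<union> (D - {v})"
  have SE: "S \<subseteq> E" unfolding S_def using CE DE by blast
  have pS: "p \<notin> S" unfolding S_def using pCD by blast
  have rS: "r S = r (C - {u}) + r (D - {v})"
    unfolding S_def using skew_sub[OF CE DE sk, of "C - {u}" "D - {v}"] by blast
  have iCu: "I (C - {u})" using circ_minus[OF C u] .
  have iDv: "I (D - {v})" using circ_minus[OF D v] .
  have rS2: "r S = card C - 1 + (card D - 1)"
    using rS indep_rank[OF iCu] indep_rank[OF iDv] fC fD u v by simp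
  have cS: "card S = card (C - {u}) + card (D - {v})"
    unfolding S_def using card_Un_disjoint[of "C - {u}" "D - {v}"] fC fD disj by blast
  have iS: "I S" using rank_indep[OF SE] rS cS indep_rank[OF iCu] indep_rank[OF iDv] by simp
  have rCD: "r (C \<union> D) = card C - 1 + (card D - 1)" using sk circ_rank[OF C] circ_rank[OF D] by simp
  have "r (insert p S) \<le> r (insert p (C \<union> D))"
    by (rule rank_mono) (use CE DE pE in \<open>auto simp: S_def\<close>)
  moreover have "r S \<le> r (insert p S)" by (rule rank_mono) (use SE pE in auto)
  ultimately have spS: "spn S p" using sp rS2 rCD unfolding spn_def by simp
  obtain W where W: "circ W" "p \<in> W" "W \<subseteq> insert p S" using spn_circ[OF SE pE pS spS] by blast
  have G1W: "G1 \<subseteq> W"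
  proof
    fix x assume x: "x \<in> G1"
    show "x \<in> W"
    proof (rule ccontr)
      assume "x \<notin> W"
      hence "W - {p} \<subseteq> (C - {u, x}) \<union> D" using W(3) unfolding S_def by blast
      moreover have "(C - {u, x}) \<union> D \<subseteq> E" using CE DE by blast
      ultimately have "spn ((C - {u, x}) \<union> D) p" using circ_spn_set[OF W(1) W(2)] by blast
      thus False using x unfolding G1_def by blast
    qed
  qed
  have G2W: "G2 \<subseteq> W"
  proof
    fix x assume x: "x \<in> G2"
    show "x \<in> W"
    proof (rule ccontr)
      assume "x \<notin> W"
      hence "W - {p} \<subseteq> (D - {v, x}) \<union> C" using W(3) unfolding S_def by blast
      moreover have "(D - {v, x}) \<union> C \<subseteq> E" using CE DE by blast
      ultimately have "spn ((D - {v, x}) \<union> C) p" using circ_spn_set[OF W(1) W(2)] by blast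
      thus False using x unfolding G2_def by blast
    qed
  qed
  have sub: "insert p (G1 \<union> G2) \<subseteq> W" using G1W G2W W(2) by blast
  have fG1: "finite G1" unfolding G1_def using fC by simp
  have fG2: "finite G2" unfolding G2_def using fD by simp
  have d12: "G1 \<inter> G2 = {}" unfolding G1_def G2_def using disj by blast
  have pG: "p \<notin> G1 \<union> G2" unfolding G1_def G2_def using pCD by blast
  have "card (insert p (G1 \<union> G2)) = card G1 + card G2 + 1"
    using card_Un_disjoint[OF fG1 fG2 d12] pG fG1 fG2 by simp
  moreover have "card (insert p (G1 \<union> G2)) \<le> card W" using card_mono[OF circ_fin[OF W(1)] sub] .
  ultimately have "card G1 + card G2 + 1 \<le> card W" by simp
  hence "card C + card D + 2 \<le> 2 * card W" using gu gv unfolding G1_def G2_def by linarith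
  thus ?thesis using W(1) by blast
qed

lemma minZ_not_spn:
  assumes C: "circ C" and D: "circ D" and disj: "C \<inter> D = {}"
    and Z0: "circ Z0" "Z0 \<inter> C \<noteq> {}" "Z0 \<inter> D \<noteq> {}"
    and mn: "\<forall>Z. circ Z \<and> Z \<inter> C \<noteq> {} \<and> Z \<inter> D \<noteq> {} \<longrightarrow> card (Z0 - (C \<union> D)) \<le> card (Z - (C \<union> D))"
    and p: "p \<in> Z0" "p \<notin> C \<union> D"
  shows "\<not> spn C p"
proof
  assume sp: "spn C p"
  have CE: "C \<subseteq> E" using circ_sub[OF C] .
  have pE: "p \<in> E" using p circ_sub[OF Z0(1)] by blast
  have pC: "p \<notin> C" using p by blast
  obtain Y where Y: "circ Y" "p \<in> Y" "Y \<subseteq> insert p C" using spn_circ[OF CE pE pC sp] by blast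
  obtain z where z: "z \<in> Z0" "z \<in> D" using Z0(3) by blast
  have zY: "z \<notin> Y" using Y(3) z(2) disj p by blast
  obtain W where W: "circ W" "z \<in> W" "W \<subseteq> (Z0 \<union> Y) - {p}"
    using strong_elim[OF Z0(1) Y(1) p(1) Y(2) z(1) zY] by blast
  show False
  proof (cases "W \<inter> C = {}")
    case True
    hence "W \<subseteq> Z0" using W(3) Y(3) by blast
    hence "W = Z0" using circ_incomp[OF W(1) Z0(1)] by blast
    thus False using W(3) p(1) by blast
  next
    case False
    have WD: "W \<inter> D \<noteq> {}" using W(2) z(2) by blast
    have le: "card (Z0 - (C \<union> D)) \<le> card (W - (C \<union> D))" using mn W(1) False WD by blast
    have sub: "W - (C \<union> D) \<subseteq> (Z0 - (C \<union> D)) - {p}" using W(3) Y(3) by blast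
    have fin: "finite (Z0 - (C \<union> D))" using circ_fin[OF Z0(1)] by simp
    have pP: "p \<in> Z0 - (C \<union> D)" using p by blast
    have c1: "card (W - (C \<union> D)) \<le> card ((Z0 - (C \<union> D)) - {p})"
      using card_mono[OF _ sub] fin by blast
    have c2: "card ((Z0 - (C \<union> D)) - {p}) < card (Z0 - (C \<union> D))"
      using card_Diff1_less[OF fin pP] .
    have "card (W - (C \<union> D)) < card (Z0 - (C \<union> D))" using c1 c2 by linarith
    thus False using le by simp
  qed
qed

lemma contr_circ1:
  assumes Y: "circ Y" and pY: "p \<notin> Y" and pE: "p \<in> E" and ns: "\<not> spn Y p"
  shows "circuit (E - {p}) (contr_I E I {p} {p}) Y"
proof -
  have YE: "Y \<subseteq> E" using circ_sub[OF Y] .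
  have 1: "Y \<subseteq> E - {p}" using YE pY by blast
  have 2: "\<not> contr_I E I {p} {p} Y"
  proof
    assume "contr_I E I {p} {p} Y"
    hence a: "I (Y \<union> {p})" unfolding contr_I_def by simp
    have "I Y" by (rule I_mono[OF a]) blast
    thus False using circ_dep[OF Y] by simp
  qed
  have 3: "\<forall>c\<in>Y. contr_I E I {p} {p} (Y - {c})"
  proof
    fix c assume c: "c \<in> Y"
    have sub: "Y - {c} \<subseteq> Y" by blast
    have "\<not> spn (Y - {c}) p"
    proof
      assume "spn (Y - {c}) p"
      from spn_mono[OF this sub YE pE] ns show False by blast
    qed
    moreover have "p \<notin> Y - {c}" using pY by simp
    ultimately have i: "I (insert p (Y - {c}))" using not_spn_indep[OF circ_minus[OF Y c] pE] by blast
    have e: "insert p (Y - {c}) = (Y - {c}) \<union> {p}" by blast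
    have "Y - {c} \<subseteq> E - {p}" using 1 by blast
    thus "contr_I E I {p} {p} (Y - {c})" unfolding contr_I_def using i e by metis
  qed
  show ?thesis unfolding circuit_def using 1 2 3 by simp
qed

lemma contr_circ2:
  assumes Z: "circ Z" and p: "p \<in> Z"
  shows "circuit (E - {p}) (contr_I E I {p} {p}) (Z - {p})"
proof -
  have 1: "Z - {p} \<subseteq> E - {p}" using circ_sub[OF Z] by blast
  have e: "(Z - {p}) \<union> {p} = Z" using p by blast
  have 2: "\<not> contr_I E I {p} {p} (Z - {p})" unfolding contr_I_def using e circ_dep[OF Z] by simp
  have 3: "\<forall>c\<in>Z - {p}. contr_I E I {p} {p} ((Z - {p}) - {c})"
  proof
    fix c assume c: "c \<in> Z - {p}"
    have e2: "((Z - {p}) - {c}) \<union> {p} = Z - {c}" using c p by blast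
    have "I (Z - {c})" using circ_minus[OF Z] c by blast
    moreover have "(Z - {p}) - {c} \<subseteq> E - {p}" using 1 by blast
    ultimately show "contr_I E I {p} {p} ((Z - {p}) - {c})" unfolding contr_I_def e2 by blast
  qed
  show ?thesis unfolding circuit_def using 1 2 3 by blast
qed

end

lemma lemmaL:
  "matroid E I \<Longrightarrow> circuit E I C \<Longrightarrow> circuit E I D \<Longrightarrow> C \<inter> D = {} \<Longrightarrow>
   mrank I (C \<union> D) = mrank I C + mrank I D \<Longrightarrow> circuit E I Z \<Longrightarrow> Z \<inter> C \<noteq> {} \<Longrightarrow> Z \<inter> D \<noteq> {} \<Longrightarrow>
   card (Z - (C \<union> D)) \<le> n \<Longrightarrow> \<exists>W. circuit E I W \<and> card C + card D + 2 \<le> 2 * card W"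
proof (induction n arbitrary: E I C D Z rule: less_induct)
  case (less n)
  interpret mat E I using less(2) by unfold_locales
  note C = less(3) and D = less(4) and disj = less(5) and sk = less(6)
  have CE: "C \<subseteq> E" and DE: "D \<subseteq> E" using circ_sub C D by auto
  define Pz where "Pz = (\<lambda>Z. circ Z \<and> Z \<inter> C \<noteq> {} \<and> Z \<inter> D \<noteq> {})"
  have PZ: "Pz Z" unfolding Pz_def using less by blast
  obtain Z0 where Z0: "Pz Z0" and mn0: "\<forall>Z. Pz Z \<longrightarrow> card (Z0 - (C \<union> D)) \<le> card (Z - (C \<union> D))"
    using ex_has_least_nat[of Pz Z "\<lambda>Z. card (Z - (C \<union> D))"] PZ by blast
  have Z0c: "circ Z0" "Z0 \<inter> C \<noteq> {}" "Z0 \<inter> D \<noteq> {}" using Z0 unfolding Pz_def by auto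
  have mn: "\<forall>Z. circ Z \<and> Z \<inter> C \<noteq> {} \<and> Z \<inter> D \<noteq> {} \<longrightarrow> card (Z0 - (C \<union> D)) \<le> card (Z - (C \<union> D))"
    using mn0 unfolding Pz_def by blast
  have mn': "\<forall>Z. circ Z \<and> Z \<inter> D \<noteq> {} \<and> Z \<inter> C \<noteq> {} \<longrightarrow> card (Z0 - (D \<union> C)) \<le> card (Z - (D \<union> C))"
    using mn by (simp add: Un_commute conj_commute)
  define P0 where "P0 = Z0 - (C \<union> D)"
  have m0n: "card P0 \<le> n" using mn PZ less(10) unfolding Pz_def P0_def by fastforce
  have fP0: "finite P0" unfolding P0_def using circ_fin[OF Z0c(1)] by simp
  have P0ne: "P0 \<noteq> {}"
  proof
    assume "P0 = {}"
    hence "Z0 \<subseteq> C \<union> D" unfolding P0_def by blast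
    hence "Z0 \<subseteq> C \<or> Z0 \<subseteq> D" using skew_no_cross[OF CE DE disj sk Z0c(1)] by blast
    thus False using Z0c disj by blast
  qed
  have nC: "\<And>p. p \<in> P0 \<Longrightarrow> \<not> spn C p"
    using minZ_not_spn[OF C D disj Z0c mn] unfolding P0_def by blast
  have disj': "D \<inter> C = {}" using disj by blast
  have nD: "\<And>p. p \<in> P0 \<Longrightarrow> \<not> spn D p"
  proof -
    fix p assume p: "p \<in> P0"
    have "p \<in> Z0" "p \<notin> D \<union> C" using p unfolding P0_def by auto
    thus "\<not> spn D p" using minZ_not_spn[OF D C disj' Z0c(1) Z0c(3) Z0c(2) mn'] by blast
  qed
  show ?case
  proof (cases "card P0 = 1")
    case True
    then obtain p where p: "P0 = {p}" using card_1_singletonE by blast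
    have pZ: "p \<in> Z0" "p \<notin> C \<union> D" using p unfolding P0_def by auto
    have pE: "p \<in> E" using pZ circ_sub[OF Z0c(1)] by blast
    have CDE: "C \<union> D \<subseteq> E" using CE DE by blast
    have "Z0 - {p} \<subseteq> C \<union> D" using p unfolding P0_def by blast
    hence sp: "spn (C \<union> D) p" using circ_spn_set[OF Z0c(1) pZ(1) _ CDE] by blast
    show ?thesis using bigW[OF C D disj sk pE pZ(2) nC nD sp] p by blast
  next
    case False
    hence two: "card P0 \<ge> 2" using P0ne fP0 by (metis One_nat_def Suc_1 Suc_leI card_gt_0_iff le_antisym not_less_eq_eq)
    obtain p where p: "p \<in> P0" using P0ne by blast
    have pZ: "p \<in> Z0" "p \<notin> C \<union> D" using p unfolding P0_def by auto
    have pE: "p \<in> E" using pZ circ_sub[OF Z0c(1)] by blast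
    have CDE: "C \<union> D \<subseteq> E" using CE DE by blast
    have nCD: "\<not> spn (C \<union> D) p"
    proof
      assume "spn (C \<union> D) p"
      then obtain Y where Y: "circ Y" "p \<in> Y" "Y \<subseteq> insert p (C \<union> D)"
        using spn_circ[OF CDE pE pZ(2)] by blast
      have YC: "Y \<inter> C \<noteq> {}"
      proof
        assume "Y \<inter> C = {}"
        hence "Y - {p} \<subseteq> D" using Y(3) by blast
        hence "spn D p" using circ_spn_set[OF Y(1) Y(2) _ DE] by blast
        thus False using nD[OF p] by blast
      qed
      have YD: "Y \<inter> D \<noteq> {}"
      proof
        assume "Y \<inter> D = {}"
        hence "Y - {p} \<subseteq> C" using Y(3) by blast
        hence "spn C p" using circ_spn_set[OF Y(1) Y(2) _ CE] by blast
        thus False using nC[OF p] by blast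
      qed
      have "Y - (C \<union> D) \<subseteq> {p}" using Y(3) by blast
      hence "card (Y - (C \<union> D)) \<le> 1" using card_mono[of "{p}"] by fastforce
      moreover have "card P0 \<le> card (Y - (C \<union> D))" using mn Y(1) YC YD unfolding P0_def by blast
      ultimately show False using two by simp
    qed
    have nsE: "\<not> spn {} p"
    proof
      assume "spn {} p"
      hence "spn (C \<union> D) p" using spn_mono[of "{}" p "C \<union> D"] CDE pE by blast
      thus False using nCD by blast
    qed
    have ip: "I {p}" using not_spn_indep[OF I_empty pE _ nsE] by simp
    have rp: "r {p} = 1" using indep_rank[OF ip] by simp
    have pEsub: "{p} \<subseteq> E" using pE by blast
    define I' where "I' = contr_I E I {p} {p}"
    have m': "matroid (E - {p}) I'" unfolding I'_def using contr_matroid[OF pEsub order_refl ip] .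
    have rk': "\<And>X. X \<subseteq> E - {p} \<Longrightarrow> mrank I' X = r (X \<union> {p}) - 1"
      unfolding I'_def using contr_rank[OF pEsub order_refl ip] rp by simp
    have rkCD: "\<And>X. X \<subseteq> C \<union> D \<Longrightarrow> mrank I' X = r X"
    proof -
      fix X assume X: "X \<subseteq> C \<union> D"
      have XE: "X \<subseteq> E - {p}" using X CDE pZ by blast
      have "\<not> spn X p" using spn_mono[of X p "C \<union> D"] X CDE pE nCD by blast
      moreover have "r X \<le> r (insert p X)" by (rule rank_mono) (use XE pE in auto)
      moreover have "r (insert p X) \<le> r X + 1" using rank_insert XE pE by blast
      ultimately have "r (X \<union> {p}) = r X + 1" unfolding spn_def by simp
      thus "mrank I' X = r X" using rk'[OF XE] by simp
    qed
    have C': "circuit (E - {p}) I' C" unfolding I'_def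
      using contr_circ1[OF C _ pE] pZ nCD spn_mono[of C p "C \<union> D"] CDE pE by blast
    have D': "circuit (E - {p}) I' D" unfolding I'_def
      using contr_circ1[OF D _ pE] pZ nCD spn_mono[of D p "C \<union> D"] CDE pE by blast
    have Z': "circuit (E - {p}) I' (Z0 - {p})" unfolding I'_def using contr_circ2[OF Z0c(1) pZ(1)] .
    have sk': "mrank I' (C \<union> D) = mrank I' C + mrank I' D" using rkCD sk by simp
    have m1: "(Z0 - {p}) \<inter> C \<noteq> {}" "(Z0 - {p}) \<inter> D \<noteq> {}" using Z0c pZ by blast+
    have "(Z0 - {p}) - (C \<union> D) = P0 - {p}" unfolding P0_def by blast
    hence cz: "card ((Z0 - {p}) - (C \<union> D)) \<le> card P0 - 1" using fP0 p by simp
    have lt: "card P0 - 1 < n" using m0n two by simp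
    obtain W' where W': "circuit (E - {p}) I' W'" "card C + card D + 2 \<le> 2 * card W'"
      using less(1)[OF lt m' C' D' disj sk' Z' m1 cz] by blast
    have W'E: "W' \<subseteq> E - {p}" using W'(1) unfolding circuit_def by blast
    have ndep: "\<not> I (W' \<union> {p})" using W'(1) W'E unfolding circuit_def I'_def contr_I_def by blast
    have W'pE: "W' \<union> {p} \<subseteq> E" using W'E pE by blast
    obtain W where W: "W \<subseteq> W' \<union> {p}" "circ W" using dep_circ[OF W'pE ndep] by blast
    have "W' \<subseteq> W"
    proof
      fix w assume w: "w \<in> W'"
      show "w \<in> W"
      proof (rule ccontr)
        assume "w \<notin> W"
        hence "W \<subseteq> (W' - {w}) \<union> {p}" using W(1) by blast
        moreover have "I ((W' - {w}) \<union> {p})" using W'(1) w unfolding circuit_def I'_def contr_I_def by blast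
        ultimately show False using I_mono circ_dep[OF W(2)] by blast
      qed
    qed
    hence "card W' \<le> card W" using card_mono[OF circ_fin[OF W(2)]] by blast
    thus ?thesis using W(2) W'(2) by (intro exI[of _ W]) simp
  qed
qed


lemma tdist_props:
  assumes rt: "rooted_tree V root par" and v: "v \<in> V"
  shows "(par ^^ tdist root par v) v = root" "\<And>m. m < tdist root par v \<Longrightarrow> (par ^^ m) v \<noteq> root"
proof -
  obtain n where n: "(par ^^ n) v = root" using rt v unfolding rooted_tree_def by blast
  show "(par ^^ tdist root par v) v = root" unfolding tdist_def using LeastI[of "\<lambda>n. (par ^^ n) v = root", OF n] .
  fix m assume "m < tdist root par v"
  thus "(par ^^ m) v \<noteq> root" unfolding tdist_def using not_less_Least by blast
qed

lemma tdist_le: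
  assumes rt: "rooted_tree V root par" and v: "v \<in> V"
  shows "tdist root par v + 1 \<le> card V"
proof -
  define n where "n = tdist root par v"
  have hit: "(par ^^ n) v = root" unfolding n_def using tdist_props[OF rt v] by blast
  have nohit: "\<And>m. m < n \<Longrightarrow> (par ^^ m) v \<noteq> root" unfolding n_def using tdist_props[OF rt v] by blast
  have inV: "\<And>k. k \<le> n \<Longrightarrow> (par ^^ k) v \<in> V"
  proof -
    fix k show "k \<le> n \<Longrightarrow> (par ^^ k) v \<in> V"
    proof (induction k)
      case 0 thus ?case using v by simp
    next
      case (Suc k)
      have a: "(par ^^ k) v \<in> V" using Suc by simp
      have b: "(par ^^ k) v \<noteq> root" using nohit Suc(2) by simp
      have "par ((par ^^ k) v) \<in> V" using rt a b unfolding rooted_tree_def by blast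
      thus ?case by simp
    qed
  qed
  have inj: "inj_on (\<lambda>k. (par ^^ k) v) {0..n}"
  proof (rule inj_onI, rule ccontr)
    fix i j assume i: "i \<in> {0..n}" and j: "j \<in> {0..n}" and e: "(par ^^ i) v = (par ^^ j) v" and ne: "i \<noteq> j"
    have key: "\<And>a b. a < b \<Longrightarrow> b \<le> n \<Longrightarrow> (par ^^ a) v = (par ^^ b) v \<Longrightarrow> False"
    proof -
      fix a b assume ab: "a < b" "b \<le> n" "(par ^^ a) v = (par ^^ b) v"
      have "(par ^^ (n - b + a)) v = (par ^^ (n - b)) ((par ^^ a) v)" by (simp add: funpow_add)
      also have "\<dots> = (par ^^ (n - b)) ((par ^^ b) v)" using ab by simp
      also have "\<dots> = (par ^^ (n - b + b)) v" by (simp add: funpow_add)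
      also have "n - b + b = n" using ab by simp
      finally have "(par ^^ (n - b + a)) v = root" using hit by simp
      moreover have "n - b + a < n" using ab by simp
      ultimately show False using nohit by blast
    qed
    show False
    proof (cases "i < j")
      case True thus False using key[of i j] j e by auto
    next
      case False hence "j < i" using ne by simp
      thus False using key[of j i] i e by auto
    qed
  qed
  have sub: "(\<lambda>k. (par ^^ k) v) ` {0..n} \<subseteq> V" using inV by auto
  have fV: "finite V" using rt unfolding rooted_tree_def by blast
  have "card ((\<lambda>k. (par ^^ k) v) ` {0..n}) = n + 1" using card_image[OF inj] by simp
  thus ?thesis using card_mono[OF fV sub] n_def by simp
qed

lemma tdepth_le: "rooted_tree V root par \<Longrightarrow> tdepth V root par \<le> tedges V"
proof -
  assume rt: "rooted_tree V root par"
  have fV: "finite V" and rV: "root \<in> V" using rt unfolding rooted_tree_def by auto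
  have "\<forall>x\<in>tdist root par ` V. x \<le> card V - 1" using tdist_le[OF rt] by fastforce
  moreover have ne: "tdist root par ` V \<noteq> {}" using rV by blast
  ultimately have "Max (tdist root par ` V) \<le> card V - 1" using Max_le_iff[OF finite_imageI[OF fV] ne] by blast
  thus ?thesis unfolding tdepth_def tedges_def .
qed

definition ltree :: "nat list set \<Rightarrow> bool" where
  "ltree V \<longleftrightarrow> finite V \<and> [] \<in> V \<and> (\<forall>v\<in>V. tl v \<in> V)"

definition sufs :: "nat list \<Rightarrow> nat list set" where
  "sufs v = (\<lambda>m. drop m v) ` {0..length v}"

definition lstar :: "('a \<Rightarrow> nat list) \<Rightarrow> 'a set \<Rightarrow> nat list set" where
  "lstar f X = (\<Union>x\<in>X. sufs (f x))"

definition ldd :: "'a set \<Rightarrow> ('a set \<Rightarrow> bool) \<Rightarrow> nat list set \<Rightarrow> ('a \<Rightarrow> nat list) \<Rightarrow> nat \<Rightarrow> bool" where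
  "ldd E I V f d \<longleftrightarrow> ltree V \<and> (\<forall>x\<in>E. f x \<in> V) \<and> mrank I E = card V - 1 \<and>
     (\<forall>X. X \<subseteq> E \<longrightarrow> mrank I X \<le> card (lstar f X) - 1) \<and> (\<forall>v\<in>V. length v \<le> d)"

lemma ldd_mono: "ldd E I V f d \<Longrightarrow> d \<le> d' \<Longrightarrow> ldd E I V f d'"
  unfolding ldd_def using le_trans by blast

lemma sufs_fin: "finite (sufs v)" unfolding sufs_def by simp
lemma sufs_nil: "[] \<in> sufs v"
proof -
  have "drop (length v) v = []" by simp
  moreover have "length v \<in> {0..length v}" by simp
  ultimately show ?thesis unfolding sufs_def by (metis image_eqI)
qed

lemma drop_in_ltree: "ltree V \<Longrightarrow> v \<in> V \<Longrightarrow> drop k v \<in> V"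
proof (induction k)
  case 0 thus ?case by simp
next
  case (Suc k)
  have "drop k v \<in> V" using Suc by blast
  hence "tl (drop k v) \<in> V" using Suc(2) unfolding ltree_def by blast
  thus ?case by (simp add: tl_drop drop_Suc)
qed

lemma sufs_sub: "ltree V \<Longrightarrow> v \<in> V \<Longrightarrow> sufs v \<subseteq> V"
proof
  fix w assume a: "ltree V" "v \<in> V" "w \<in> sufs v"
  then obtain m where "w = drop m v" unfolding sufs_def by blast
  thus "w \<in> V" using drop_in_ltree[OF a(1,2)] by simp
qed

lemma lstar_sub: "ltree V \<Longrightarrow> (\<forall>x\<in>X. f x \<in> V) \<Longrightarrow> lstar f X \<subseteq> V"
proof
  fix w assume a: "ltree V" "\<forall>x\<in>X. f x \<in> V" "w \<in> lstar f X"
  then obtain x where x: "x \<in> X" "w \<in> sufs (f x)" unfolding lstar_def by blast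
  thus "w \<in> V" using sufs_sub[OF a(1)] a(2) by blast
qed

lemma lstar_fin: "ltree V \<Longrightarrow> (\<forall>x\<in>X. f x \<in> V) \<Longrightarrow> finite (lstar f X)"
proof -
  assume a: "ltree V" "\<forall>x\<in>X. f x \<in> V"
  have "finite V" using a(1) unfolding ltree_def by blast
  thus ?thesis using finite_subset[OF lstar_sub[OF a]] by blast
qed

lemma lstar_ne: "X \<noteq> {} \<Longrightarrow> [] \<in> lstar f X"
  unfolding lstar_def using sufs_nil by blast

lemma to_nat_funpow:
  "((\<lambda>n. to_nat (tl (from_nat n :: nat list))) ^^ k) (to_nat v) = to_nat (drop k (v :: nat list))"
proof (induction k)
  case 0 thus ?case by simp
next
  case (Suc k)
  thus ?case by (simp add: tl_drop drop_Suc)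
qed

lemma ldd_bd:
  assumes l: "ldd E I V f d"
  shows "branch_depth E I \<le> d"
proof -
  define g :: "nat list \<Rightarrow> nat" where "g = to_nat"
  have ginj: "inj g" unfolding g_def by simp
  define par :: "nat \<Rightarrow> nat" where "par = (\<lambda>n. to_nat (tl (from_nat n :: nat list)))"
  have fp: "\<And>k v. (par ^^ k) (g v) = g (drop k v)" unfolding par_def g_def using to_nat_funpow by blast
  have lt: "ltree V" and fV: "finite V" and nV: "[] \<in> V" using l unfolding ldd_def ltree_def by auto
  have td: "\<And>v. tdist (g []) par (g v) = length v"
  proof -
    fix v :: "nat list"
    have "(LEAST n. (par ^^ n) (g v) = g []) = length v"
    proof (rule Least_equality)
      show "(par ^^ length v) (g v) = g []" using fp by simp
      fix y assume "(par ^^ y) (g v) = g []"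
      hence "drop y v = []" using fp ginj by (simp add: inj_eq)
      thus "length v \<le> y" by simp
    qed
    thus "tdist (g []) par (g v) = length v" unfolding tdist_def .
  qed
  have rp: "\<And>v. root_path (g []) par (g v) = g ` sufs v"
  proof -
    fix v
    have "root_path (g []) par (g v) = {g (drop k v) |k. k \<le> length v}"
      unfolding root_path_def td fp by simp
    also have "\<dots> = g ` sufs v"
    proof (rule set_eqI)
      fix w show "w \<in> {g (drop k v) |k. k \<le> length v} \<longleftrightarrow> w \<in> g ` sufs v"
        unfolding sufs_def by (auto simp: image_iff)
    qed
    finally show "root_path (g []) par (g v) = g ` sufs v" .
  qed
  have rt: "rooted_tree (g ` V) (g []) par"
    unfolding rooted_tree_def
  proof (intro conjI ballI impI)
    show "finite (g ` V)" using fV by simp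
    show "g [] \<in> g ` V" using nV by simp
  next
    fix w assume "w \<in> g ` V"
    then obtain v where v: "v \<in> V" "w = g v" by blast
    have "par w = g (tl v)" using v fp[of 1 v] by (simp add: drop_Suc)
    moreover have "tl v \<in> V" using lt v unfolding ltree_def by blast
    ultimately show "par w \<in> g ` V" by simp
  next
    fix w assume "w \<in> g ` V"
    then obtain v where v: "v \<in> V" "w = g v" by blast
    show "\<exists>n. (par ^^ n) w = g []" using v fp[of "length v" v] by auto
  qed
  have cardV: "card (g ` V) = card V" using card_image[OF inj_on_subset[OF ginj subset_UNIV]] .
  have dd: "depth_decomposition E I (g ` V) (g []) par (g \<circ> f)"
    unfolding depth_decomposition_def
  proof (intro conjI allI impI ballI)
    show "rooted_tree (g ` V) (g []) par" using rt .
  next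
    fix x assume "x \<in> E" thus "(g \<circ> f) x \<in> g ` V" using l unfolding ldd_def by auto
  next
    show "mrank I E = tedges (g ` V)" using l cardV unfolding ldd_def tedges_def by simp
  next
    fix X assume X: "X \<subseteq> E"
    have "(\<Union>x\<in>X. root_path (g []) par ((g \<circ> f) x)) = g ` lstar f X"
      unfolding lstar_def using rp by auto
    moreover have "card (g ` lstar f X) = card (lstar f X)"
      using card_image[OF inj_on_subset[OF ginj subset_UNIV]] .
    ultimately show "mrank I X \<le> tstar_edges (g []) par (g \<circ> f) X"
      using l X unfolding ldd_def tstar_edges_def by simp
  qed
  have depth: "tdepth (g ` V) (g []) par \<le> d"
  proof -
    have "tdist (g []) par ` g ` V = length ` V" unfolding image_image td by simp
    moreover have "\<forall>x\<in>length ` V. x \<le> d" using l unfolding ldd_def by blast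
    moreover have ne: "length ` V \<noteq> {}" using nV by blast
    ultimately show ?thesis unfolding tdepth_def using Max_le_iff[OF finite_imageI[OF fV] ne] by simp
  qed
  define S where "S = {tdepth V root par | (V :: nat set) root par f. depth_decomposition E I V root par f}"
  have inS: "tdepth (g ` V) (g []) par \<in> S" unfolding S_def
    using dd by (intro CollectI exI conjI) (rule refl)
  have "S \<subseteq> {..mrank I E}"
  proof
    fix s assume "s \<in> S"
    then obtain V' :: "nat set" and root' :: nat and par' :: "nat \<Rightarrow> nat" and f' :: "'a \<Rightarrow> nat" where s: "s = tdepth V' root' par'" and d': "depth_decomposition E I V' root' par' f'"
      unfolding S_def by blast
    have rt': "rooted_tree V' root' par'" using d' unfolding depth_decomposition_def by simp
    have e': "mrank I E = tedges V'" using d' unfolding depth_decomposition_def by simp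
    show "s \<in> {..mrank I E}" using tdepth_le[OF rt'] e' s by simp
  qed
  hence fS: "finite S" using finite_subset[OF _ finite_atMost] by blast
  have "branch_depth E I = Min S" unfolding branch_depth_def S_def by (rule refl)
  also have "\<dots> \<le> tdepth (g ` V) (g []) par" using Min_le[OF fS inS] .
  finally show ?thesis using depth by simp
qed


lemma sufs_map: "sufs (map h v) = map h ` sufs v"
proof -
  have "sufs (map h v) = (\<lambda>m. map h (drop m v)) ` {0..length v}" unfolding sufs_def by (simp add: drop_map)
  thus ?thesis unfolding sufs_def by (simp add: image_image)
qed

lemma sufs_app1: "(\<lambda>w. w @ R) ` sufs v \<subseteq> sufs (v @ R)"
proof
  fix w assume "w \<in> (\<lambda>w. w @ R) ` sufs v"
  then obtain m where m: "m \<le> length v" "w = drop m v @ R" unfolding sufs_def by auto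
  hence "w = drop m (v @ R)" by simp
  moreover have "m \<in> {0..length (v @ R)}" using m by simp
  ultimately show "w \<in> sufs (v @ R)" unfolding sufs_def by blast
qed

lemma sufs_app2: "sufs R \<subseteq> sufs (v @ R)"
proof
  fix w assume "w \<in> sufs R"
  then obtain m where m: "m \<le> length R" "w = drop m R" unfolding sufs_def by auto
  hence "w = drop (length v + m) (v @ R)" by simp
  moreover have "length v + m \<in> {0..length (v @ R)}" using m by simp
  ultimately show "w \<in> sufs (v @ R)" unfolding sufs_def by blast
qed

lemma sufs_rep: "sufs (replicate k (0::nat)) = (\<lambda>j. replicate j 0) ` {0..k}"
proof -
  have "sufs (replicate k (0::nat)) = (\<lambda>m. replicate (k - m) 0) ` {0..k}" unfolding sufs_def by simp
  also have "\<dots> = (\<lambda>j. replicate j 0) ` ((\<lambda>m. k - m) ` {0..k})" by (simp add: image_image)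
  also have "(\<lambda>m. k - m) ` {0..k} = {0..k}"
  proof (rule set_eqI)
    fix j show "j \<in> (\<lambda>m. k - m) ` {0..k} \<longleftrightarrow> j \<in> {0..k}"
    proof
      assume "j \<in> {0..k}" thus "j \<in> (\<lambda>m. k - m) ` {0..k}" by (intro image_eqI[of _ _ "k - j"]) auto
    qed auto
  qed
  finally show ?thesis .
qed

lemma rep_inj: "inj (\<lambda>j. replicate j (0::nat))"
  by (rule injI) (metis length_replicate)

lemma stack:
  assumes m: "matroid E I" and X: "X \<subseteq> E" and J: "J \<subseteq> X" "I J" "card J = mrank I X"
    and l: "ldd (E - X) (contr_I E I X J) V f d"
  shows "\<exists>V' f'. ldd E I V' f' (d + mrank I X)"
proof -
  interpret mat E I using m by unfold_locales
  define k where "k = r X"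
  define app where "app = (\<lambda>v::nat list. v @ replicate k 0)"
  define P where "P = (\<lambda>j. replicate j (0::nat)) ` {..<k}"
  define V' where "V' = app ` V \<union> P"
  define f' where "f' = (\<lambda>x. if x \<in> X then replicate k 0 else app (f x))"
  have lt: "ltree V" and fV: "finite V" and nV: "[] \<in> V" using l unfolding ldd_def ltree_def by auto
  have tlV: "\<And>v. v \<in> V \<Longrightarrow> tl v \<in> V" using lt unfolding ltree_def by blast
  have appinj: "inj app" unfolding app_def by (rule injI) simp
  have disjP: "app ` V \<inter> P = {}"
  proof -
    have "\<And>v j. j < k \<Longrightarrow> app v \<noteq> replicate j 0"
    proof
      fix v j assume "j < k" "app v = replicate j (0::nat)"
      hence "length (app v) = j" by simp
      thus False using \<open>j < k\<close> unfolding app_def by simp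
    qed
    thus ?thesis unfolding P_def by auto
  qed
  have cP: "card P = k" unfolding P_def using card_image[OF inj_on_subset[OF rep_inj subset_UNIV]] by simp
  have fP: "finite P" unfolding P_def by simp
  have cV': "card V' = card V + k"
    unfolding V'_def using card_Un_disjoint[OF finite_imageI[OF fV] fP disjP]
      card_image[OF inj_on_subset[OF appinj subset_UNIV]] cP by simp
  have repk: "replicate k 0 \<in> V'" unfolding V'_def app_def using nV by force
  have ltree': "ltree V'" unfolding ltree_def
  proof (intro conjI ballI)
    show "finite V'" unfolding V'_def using fV fP by simp
    show "[] \<in> V'"
    proof (cases "k = 0")
      case True thus ?thesis using repk by simp
    next
      case False thus ?thesis unfolding V'_def P_def by force
    qed
  next
    fix w assume "w \<in> V'"
    then consider (a) v where "v \<in> V" "w = app v" | (b) j where "j < k" "w = replicate j 0"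
      unfolding V'_def P_def by blast
    thus "tl w \<in> V'"
    proof cases
      case a
      show ?thesis
      proof (cases "v = []")
        case True
        hence "tl w = replicate (k - 1) 0" using a unfolding app_def by (simp add: tl_replicate)
        moreover have "replicate (k - 1) (0::nat) \<in> V'"
        proof (cases "k = 0")
          case True thus ?thesis using repk by simp
        next
          case False thus ?thesis unfolding V'_def P_def by force
        qed
        ultimately show ?thesis by simp
      next
        case False
        hence "tl w = app (tl v)" using a unfolding app_def by simp
        thus ?thesis unfolding V'_def using tlV[OF a(1)] by blast
      qed
    next
      case b
      hence "tl w = replicate (j - 1) 0" by (simp add: tl_replicate)
      moreover have "j - 1 < k" using b by simp
      ultimately show ?thesis unfolding V'_def P_def by blast
    qed
  qed
  have fin: "\<forall>x\<in>E. f' x \<in> V'"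
  proof
    fix x assume x: "x \<in> E"
    show "f' x \<in> V'"
    proof (cases "x \<in> X")
      case True thus ?thesis unfolding f'_def using repk by simp
    next
      case False
      hence "f x \<in> V" using l x unfolding ldd_def by blast
      thus ?thesis unfolding f'_def V'_def using False by simp
    qed
  qed
  have EX: "E - X \<subseteq> E - X" by simp
  have crk: "\<And>Z. Z \<subseteq> E - X \<Longrightarrow> mrank (contr_I E I X J) Z = r (Z \<union> X) - r X"
    using contr_rank[OF X J] by blast
  have rX: "r X \<le> r E" using rank_mono[OF X order_refl] .
  have "mrank (contr_I E I X J) (E - X) = r E - r X" using crk[OF EX] X by (simp add: Un_absorb2)
  moreover have "mrank (contr_I E I X J) (E - X) = card V - 1" using l unfolding ldd_def by blast
  moreover have "card V \<ge> 1" using nV fV card_0_eq[OF fV] by fastforce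
  ultimately have rE: "r E = card V' - 1" using rX cV' unfolding k_def by linarith
  have rk: "\<forall>Y. Y \<subseteq> E \<longrightarrow> r Y \<le> card (lstar f' Y) - 1"
  proof (intro allI impI)
    fix Y assume Y: "Y \<subseteq> E"
    have fs': "finite (lstar f' Y)" using lstar_fin[OF ltree', of Y f'] fin Y by blast
    show "r Y \<le> card (lstar f' Y) - 1"
    proof (cases "Y - X = {}")
      case True
      show ?thesis
      proof (cases "Y = {}")
        case True thus ?thesis using rank_empty by simp
      next
        case False
        then obtain y where y: "y \<in> Y" by blast
        have yX: "y \<in> X" using y True by blast
        have "sufs (f' y) \<subseteq> lstar f' Y" unfolding lstar_def using y by blast
        moreover have "f' y = replicate k 0" unfolding f'_def using yX by simp
        ultimately have sub: "(\<lambda>j. replicate j 0) ` {0..k} \<subseteq> lstar f' Y" using sufs_rep by simp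
        have "card ((\<lambda>j. replicate j (0::nat)) ` {0..k}) = k + 1"
          using card_image[OF inj_on_subset[OF rep_inj subset_UNIV]] by simp
        hence "k + 1 \<le> card (lstar f' Y)" using card_mono[OF fs' sub] by simp
        moreover have "Y \<subseteq> X" using True by blast
        hence "r Y \<le> r X" using rank_mono[OF _ X] by blast
        ultimately show ?thesis unfolding k_def by simp
      qed
    next
      case False
      define Y0 where "Y0 = Y - X"
      have Y0: "Y0 \<subseteq> E - X" unfolding Y0_def using Y by blast
      have s0: "mrank (contr_I E I X J) Y0 \<le> card (lstar f Y0) - 1" using l Y0 unfolding ldd_def by blast
      have fY0: "\<forall>x\<in>Y0. f x \<in> V" using l Y0 unfolding ldd_def by blast
      have fs0: "finite (lstar f Y0)" using lstar_fin[OF lt fY0] .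
      have Y0ne: "Y0 \<noteq> {}" using False unfolding Y0_def .
      have ne0: "[] \<in> lstar f Y0" using lstar_ne[OF Y0ne] .
      have "card (lstar f Y0) \<noteq> 0" using ne0 fs0 by auto
      hence c0: "card (lstar f Y0) \<ge> 1" by simp
      have sub1: "app ` lstar f Y0 \<subseteq> lstar f' Y"
      proof
        fix w assume "w \<in> app ` lstar f Y0"
        then obtain x u where xu: "x \<in> Y0" "u \<in> sufs (f x)" "w = app u" unfolding lstar_def by blast
        have xX: "x \<notin> X" using xu(1) unfolding Y0_def by blast
        have "app u \<in> sufs (app (f x))" using sufs_app1[of "replicate k 0" "f x"] xu(2) unfolding app_def by blast
        hence "w \<in> sufs (f' x)" using xu(3) xX unfolding f'_def by simp
        moreover have "x \<in> Y" using xu(1) unfolding Y0_def by blast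
        ultimately show "w \<in> lstar f' Y" unfolding lstar_def by blast
      qed
      have sub2: "P \<subseteq> lstar f' Y"
      proof
        fix w assume w: "w \<in> P"
        obtain x where x: "x \<in> Y0" using Y0ne by blast
        have xX: "x \<notin> X" using x unfolding Y0_def by blast
        have "P \<subseteq> (\<lambda>j. replicate j 0) ` {0..k}" unfolding P_def by auto
        hence "w \<in> sufs (replicate k 0)" using w sufs_rep by blast
        hence "w \<in> sufs (app (f x))" using sufs_app2[of "replicate k 0" "f x"] unfolding app_def by blast
        hence "w \<in> sufs (f' x)" using xX unfolding f'_def by simp
        moreover have "x \<in> Y" using x unfolding Y0_def by blast
        ultimately show "w \<in> lstar f' Y" unfolding lstar_def by blast
      qed
      have l0V: "lstar f Y0 \<subseteq> V" using lstar_sub[OF lt fY0] .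
      have dd: "app ` lstar f Y0 \<inter> P = {}" using disjP l0V by blast
      have cu: "card (app ` lstar f Y0 \<union> P) = card (lstar f Y0) + k"
        using card_Un_disjoint[OF finite_imageI[OF fs0] fP dd] card_image[OF inj_on_subset[OF appinj subset_UNIV]] cP by simp
      have "app ` lstar f Y0 \<union> P \<subseteq> lstar f' Y" using sub1 sub2 by (rule Un_least)
      from card_mono[OF fs' this] have big: "card (lstar f Y0) + k \<le> card (lstar f' Y)" using cu by simp
      have YY: "Y \<subseteq> Y0 \<union> X" unfolding Y0_def by blast
      have Y0X: "Y0 \<union> X \<subseteq> E" using Y0 X by blast
      have "r Y \<le> r (Y0 \<union> X)" using rank_mono[OF YY Y0X] .
      also have "\<dots> = mrank (contr_I E I X J) Y0 + r X"
        using crk[OF Y0] rank_mono[OF _ Y0X, of X] by simp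
      finally show ?thesis using s0 big c0 unfolding k_def by linarith
    qed
  qed
  have dp: "\<forall>v\<in>V'. length v \<le> d + r X"
  proof
    fix w assume "w \<in> V'"
    then consider (a) v where "v \<in> V" "w = app v" | (b) j where "j < k" "w = replicate j 0"
      unfolding V'_def P_def by blast
    thus "length w \<le> d + r X"
    proof cases
      case a thus ?thesis using l unfolding ldd_def app_def k_def by simp
    next
      case b thus ?thesis unfolding k_def by simp
    qed
  qed
  have "ldd E I V' f' (d + r X)" unfolding ldd_def using ltree' fin rE rk dp by blast
  thus ?thesis by blast
qed


lemma hh: "map (\<lambda>n. 2*n) v = map (\<lambda>n. Suc (2*n)) w \<Longrightarrow> v = [] \<and> w = []"
proof (cases v)
  case Nil
  assume "map (\<lambda>n. 2*n) v = map (\<lambda>n. Suc (2*n)) w"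
  thus ?thesis using Nil by simp
next
  case (Cons a v')
  assume e: "map (\<lambda>n. 2*n) v = map (\<lambda>n. Suc (2*n)) w"
  show ?thesis
  proof (cases w)
    case Nil thus ?thesis using e Cons by simp
  next
    case (Cons b w')
    hence "2 * a = Suc (2 * b)" using e \<open>v = a # v'\<close> by simp
    thus ?thesis by presburger
  qed
qed

lemma glue:
  assumes m: "matroid E I" and A: "A \<subseteq> E" and sp: "mat.sep E I A"
    and l1: "ldd A (res_I I A) V1 f1 d" and l2: "ldd (E - A) (res_I I (E - A)) V2 f2 d"
  shows "\<exists>V f. ldd E I V f d"
proof -
  interpret mat E I using m by unfold_locales
  define h1 where "h1 = map (\<lambda>n::nat. 2*n)"
  define h2 where "h2 = map (\<lambda>n::nat. Suc (2*n))"
  have i1: "inj h1" unfolding h1_def by (rule inj_mapI) (rule injI, simp)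
  have i2: "inj h2" unfolding h2_def by (rule inj_mapI) (rule injI, simp)
  have h12: "\<And>v w. h1 v = h2 w \<Longrightarrow> v = [] \<and> w = []" unfolding h1_def h2_def using hh by blast
  have dsj: "\<And>S1 S2. h1 ` S1 \<inter> h2 ` S2 \<subseteq> {[]}" using h12 unfolding h1_def by auto
  define V where "V = h1 ` V1 \<union> h2 ` V2"
  define f where "f = (\<lambda>x. if x \<in> A then h1 (f1 x) else h2 (f2 x))"
  have lt1: "ltree V1" and fV1: "finite V1" and nV1: "[] \<in> V1" using l1 unfolding ldd_def ltree_def by auto
  have lt2: "ltree V2" and fV2: "finite V2" and nV2: "[] \<in> V2" using l2 unfolding ldd_def ltree_def by auto
  have ltree: "ltree V" unfolding ltree_def
  proof (intro conjI ballI)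
    show "finite V" unfolding V_def using fV1 fV2 by simp
    show "[] \<in> V" unfolding V_def h1_def using nV1 by force
  next
    fix w assume "w \<in> V"
    then consider (a) v where "v \<in> V1" "w = h1 v" | (b) v where "v \<in> V2" "w = h2 v" unfolding V_def by blast
    thus "tl w \<in> V"
    proof cases
      case a
      hence "tl w = h1 (tl v)" unfolding h1_def by (simp add: map_tl)
      moreover have "tl v \<in> V1" using lt1 a unfolding ltree_def by blast
      ultimately show ?thesis unfolding V_def by blast
    next
      case b
      hence "tl w = h2 (tl v)" unfolding h2_def by (simp add: map_tl)
      moreover have "tl v \<in> V2" using lt2 b unfolding ltree_def by blast
      ultimately show ?thesis unfolding V_def by blast
    qed
  qed
  have fin: "\<forall>x\<in>E. f x \<in> V"
  proof
    fix x assume x: "x \<in> E"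
    show "f x \<in> V"
    proof (cases "x \<in> A")
      case True
      hence "f1 x \<in> V1" using l1 unfolding ldd_def by blast
      thus ?thesis unfolding f_def V_def using True by simp
    next
      case False
      hence "f2 x \<in> V2" using l2 x unfolding ldd_def by blast
      thus ?thesis unfolding f_def V_def using False by simp
    qed
  qed
  have cardU: "\<And>S1 S2. finite S1 \<Longrightarrow> finite S2 \<Longrightarrow>
      card (h1 ` S1 \<union> h2 ` S2) + (if S1 \<noteq> {} \<and> S2 \<noteq> {} then 1 else 0) \<ge> card S1 + card S2"
  proof -
    fix S1 S2 :: "nat list set" assume f1: "finite S1" and f2: "finite S2"
    have c1: "card (h1 ` S1) = card S1" using card_image[OF inj_on_subset[OF i1 subset_UNIV]] .
    have c2: "card (h2 ` S2) = card S2" using card_image[OF inj_on_subset[OF i2 subset_UNIV]] .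
    have u: "card (h1 ` S1 \<union> h2 ` S2) + card (h1 ` S1 \<inter> h2 ` S2) = card (h1 ` S1) + card (h2 ` S2)"
      using card_Un_Int[OF finite_imageI[OF f1, of h1] finite_imageI[OF f2, of h2]] by simp
    have "card (h1 ` S1 \<inter> h2 ` S2) \<le> (if S1 \<noteq> {} \<and> S2 \<noteq> {} then 1 else 0)"
    proof (cases "S1 \<noteq> {} \<and> S2 \<noteq> {}")
      case True
      have "card (h1 ` S1 \<inter> h2 ` S2) \<le> card {[]::nat list}" using card_mono[OF _ dsj] by simp
      thus ?thesis using True by simp
    next
      case False
      hence "h1 ` S1 \<inter> h2 ` S2 = {}" by auto
      thus ?thesis by simp
    qed
    thus "card (h1 ` S1 \<union> h2 ` S2) + (if S1 \<noteq> {} \<and> S2 \<noteq> {} then 1 else 0) \<ge> card S1 + card S2"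
      using u c1 c2 by linarith
  qed
  have cV: "card V + 1 = card V1 + card V2"
  proof -
    have "h1 ` V1 \<inter> h2 ` V2 = {[]}" using dsj nV1 nV2 unfolding h1_def h2_def by force
    hence "card (h1 ` V1 \<union> h2 ` V2) + 1 = card (h1 ` V1) + card (h2 ` V2)"
      using card_Un_Int[OF finite_imageI[OF fV1, of h1] finite_imageI[OF fV2, of h2]] by simp
    thus ?thesis unfolding V_def using card_image[OF inj_on_subset[OF i1 subset_UNIV]]
        card_image[OF inj_on_subset[OF i2 subset_UNIV]] by simp
  qed
  have EA: "E - A \<subseteq> E" by blast
  have rA: "r A = card V1 - 1" using l1 res_rank[of A A] unfolding ldd_def by simp
  have rB: "r (E - A) = card V2 - 1" using l2 res_rank[of "E - A" "E - A"] unfolding ldd_def by simp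
  have c1p: "card V1 \<ge> 1" using nV1 fV1 card_0_eq[OF fV1] by fastforce
  have c2p: "card V2 \<ge> 1" using nV2 fV2 card_0_eq[OF fV2] by fastforce
  have rE: "r E = card V - 1" using sep_rank[OF A sp] rA rB cV c1p c2p by linarith
  have lstar_eq: "\<And>Y. lstar f Y = h1 ` lstar f1 (Y \<inter> A) \<union> h2 ` lstar f2 (Y - A)"
  proof -
    fix Y
    have e1: "\<And>x. x \<in> A \<Longrightarrow> sufs (f x) = h1 ` sufs (f1 x)" unfolding f_def h1_def using sufs_map by simp
    have e2: "\<And>x. x \<notin> A \<Longrightarrow> sufs (f x) = h2 ` sufs (f2 x)" unfolding f_def h2_def using sufs_map by simp
    show "lstar f Y = h1 ` lstar f1 (Y \<inter> A) \<union> h2 ` lstar f2 (Y - A)"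
    proof (rule set_eqI, rule iffI)
      fix w assume "w \<in> lstar f Y"
      then obtain x where x: "x \<in> Y" "w \<in> sufs (f x)" unfolding lstar_def by blast
      show "w \<in> h1 ` lstar f1 (Y \<inter> A) \<union> h2 ` lstar f2 (Y - A)"
      proof (cases "x \<in> A")
        case True
        hence "w \<in> h1 ` sufs (f1 x)" using e1 x by blast
        thus ?thesis unfolding lstar_def using x True by blast
      next
        case False
        hence "w \<in> h2 ` sufs (f2 x)" using e2 x by blast
        thus ?thesis unfolding lstar_def using x False by blast
      qed
    next
      fix w assume "w \<in> h1 ` lstar f1 (Y \<inter> A) \<union> h2 ` lstar f2 (Y - A)"
      then consider (a) x where "x \<in> Y" "x \<in> A" "w \<in> h1 ` sufs (f1 x)"
        | (b) x where "x \<in> Y" "x \<notin> A" "w \<in> h2 ` sufs (f2 x)" unfolding lstar_def by blast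
      thus "w \<in> lstar f Y"
      proof cases
        case a thus ?thesis using e1 unfolding lstar_def by blast
      next
        case b thus ?thesis using e2 unfolding lstar_def by blast
      qed
    qed
  qed
  have rk: "\<forall>Y. Y \<subseteq> E \<longrightarrow> r Y \<le> card (lstar f Y) - 1"
  proof (intro allI impI)
    fix Y assume Y: "Y \<subseteq> E"
    define Y1 where "Y1 = Y \<inter> A"
    define Y2 where "Y2 = Y - A"
    have Y1A: "Y1 \<subseteq> A" and Y2B: "Y2 \<subseteq> E - A" unfolding Y1_def Y2_def using Y by auto
    have s1: "r Y1 \<le> card (lstar f1 Y1) - 1" using l1 Y1A res_rank[OF Y1A] unfolding ldd_def by metis
    have s2: "r Y2 \<le> card (lstar f2 Y2) - 1" using l2 Y2B res_rank[OF Y2B] unfolding ldd_def by metis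
    have fY1: "\<forall>x\<in>Y1. f1 x \<in> V1" using l1 Y1A unfolding ldd_def by blast
    have fY2: "\<forall>x\<in>Y2. f2 x \<in> V2" using l2 Y2B unfolding ldd_def by blast
    have fs1: "finite (lstar f1 Y1)" using lstar_fin[OF lt1 fY1] .
    have fs2: "finite (lstar f2 Y2)" using lstar_fin[OF lt2 fY2] .
    have YY: "Y = Y1 \<union> Y2" unfolding Y1_def Y2_def by blast
    have Y1E: "Y1 \<subseteq> E" and Y2E: "Y2 \<subseteq> E" using Y1A Y2B A by auto
    have sa: "r Y \<le> r Y1 + r Y2" using subadd[OF Y1E Y2E] YY by simp
    have cu: "card (lstar f Y) + (if lstar f1 Y1 \<noteq> {} \<and> lstar f2 Y2 \<noteq> {} then 1 else 0)
        \<ge> card (lstar f1 Y1) + card (lstar f2 Y2)"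
      using cardU[OF fs1 fs2] lstar_eq[of Y] unfolding Y1_def Y2_def by simp
    have ne1: "lstar f1 Y1 \<noteq> {} \<Longrightarrow> card (lstar f1 Y1) \<ge> 1" using fs1 card_0_eq[OF fs1] by fastforce
    have ne2: "lstar f2 Y2 \<noteq> {} \<Longrightarrow> card (lstar f2 Y2) \<ge> 1" using fs2 card_0_eq[OF fs2] by fastforce
    show "r Y \<le> card (lstar f Y) - 1"
    proof (cases "lstar f1 Y1 \<noteq> {} \<and> lstar f2 Y2 \<noteq> {}")
      case True
      thus ?thesis using sa s1 s2 cu ne1 ne2 by simp
    next
      case False
      thus ?thesis using sa s1 s2 cu by (cases "lstar f1 Y1 = {}") auto
    qed
  qed
  have dp: "\<forall>v\<in>V. length v \<le> d"
  proof
    fix w assume "w \<in> V"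
    then consider (a) v where "v \<in> V1" "w = h1 v" | (b) v where "v \<in> V2" "w = h2 v" unfolding V_def by blast
    thus "length w \<le> d"
    proof cases
      case a thus ?thesis using l1 unfolding ldd_def h1_def by simp
    next
      case b thus ?thesis using l2 unfolding ldd_def h2_def by simp
    qed
  qed
  have "ldd E I V f d" unfolding ldd_def using ltree fin rE rk dp by blast
  thus ?thesis by blast
qed


context mat begin

lemma key:
  assumes nosep: "\<forall>A. A \<subseteq> E \<and> A \<noteq> {} \<and> A \<noteq> E \<longrightarrow> \<not> sep A"
    and C: "circ C" and Cmax: "\<forall>Y. circ Y \<longrightarrow> card Y \<le> card C"
    and J: "J \<subseteq> C" "I J" "card J = r C"
    and D: "circuit (E - C) (contr_I E I C J) D"
  shows "card D < card C"
proof -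
  have CE: "C \<subseteq> E" using circ_sub[OF C] .
  have DE: "D \<subseteq> E - C" using D unfolding circuit_def by blast
  have ndep: "\<not> I (D \<union> J)" using D DE unfolding circuit_def contr_I_def by blast
  have ind: "\<And>d. d \<in> D \<Longrightarrow> I ((D - {d}) \<union> J)" using D unfolding circuit_def contr_I_def by blast
  have DJE: "D \<union> J \<subseteq> E" using DE J CE by blast
  obtain D2 where D2: "D2 \<subseteq> D \<union> J" "circ D2" using dep_circ[OF DJE ndep] by blast
  have DD2: "D \<subseteq> D2"
  proof
    fix d assume d: "d \<in> D"
    show "d \<in> D2"
    proof (rule ccontr)
      assume "d \<notin> D2"
      hence "D2 \<subseteq> (D - {d}) \<union> J" using D2(1) by blast
      hence "I D2" using I_mono[OF ind[OF d]] by blast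
      thus False using circ_dep[OF D2(2)] by blast
    qed
  qed
  have DJ: "D \<inter> J = {}" using DE J by blast
  have fD2: "finite D2" using circ_fin[OF D2(2)] .
  show ?thesis
  proof (cases "D2 \<inter> J = {}")
    case False
    hence "D \<subset> D2" using DD2 DJ by blast
    hence "card D < card D2" using psubset_card_mono[OF fD2] by blast
    thus ?thesis using Cmax D2(2) by fastforce
  next
    case True
    hence "D2 \<subseteq> D" using D2(1) by blast
    hence eq: "D2 = D" using DD2 by blast
    have cD: "circ D" using D2(2) eq by simp
    have disj: "C \<inter> D = {}" using DE by blast
    obtain d where d: "d \<in> D" using circ_ne[OF cD] by blast
    have fD: "finite D" using circ_fin[OF cD] .
    have fJ: "finite J" using I_fin[OF J(2)] .
    have CDE: "C \<union> D \<subseteq> E" using CE DE by blast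
    have sub: "(D - {d}) \<union> J \<subseteq> C \<union> D" using J by blast
    have "card ((D - {d}) \<union> J) \<le> r (C \<union> D)" using rank_ge[OF CDE sub ind[OF d]] .
    moreover have "card ((D - {d}) \<union> J) = card D - 1 + card J"
      using card_Un_disjoint[of "D - {d}" J] fD fJ DJ d by auto
    moreover have "r D = card D - 1" using circ_rank[OF cD] .
    moreover have "r (C \<union> D) \<le> r C + r D" using subadd[OF CE] DE by blast
    ultimately have sk: "r (C \<union> D) = r C + r D" using J(3) by linarith
    have dE: "d \<in> E" using d DE by blast
    obtain Z where Z: "circ Z" "d \<in> Z" "Z \<inter> C \<noteq> {}" using conn_circ[OF C nosep dE] by blast
    have ZD: "Z \<inter> D \<noteq> {}" using Z d by blast
    obtain W where W: "circ W" "card C + card D + 2 \<le> 2 * card W"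
      using lemmaL[OF m C cD disj sk Z(1) Z(3) ZD order_refl] by blast
    thus ?thesis using Cmax by fastforce
  qed
qed

end

lemma sq_step: "(1::nat) \<le> l \<Longrightarrow> (l - 1)^2 + (l - 1) \<le> l^2"
proof -
  assume "1 \<le> l"
  then obtain m where "l = Suc m" by (cases l) auto
  thus ?thesis by (simp add: power2_eq_square)
qed

lemma main_step:
  fixes E :: "'a set" and I :: "'a set \<Rightarrow> bool"
  assumes IH: "\<And>l' E' (I' :: 'a set \<Rightarrow> bool). l' < l \<Longrightarrow> 1 \<le> l' \<Longrightarrow> matroid E' I' \<Longrightarrow>
                 (\<forall>C. circuit E' I' C \<longrightarrow> card C \<le> l') \<Longrightarrow> \<exists>V f. ldd E' I' V f (l'^2)"
    and l1: "1 \<le> l"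
  shows "matroid E I \<Longrightarrow> (\<forall>C. circuit E I C \<longrightarrow> card C \<le> l) \<Longrightarrow> \<exists>V f. ldd E I V f (l^2)"
proof (induction "card E" arbitrary: E I rule: less_induct)
  case less
  interpret mat E I using less(2) by unfold_locales
  have circl: "\<forall>C. circ C \<longrightarrow> card C \<le> l" using less(3) .
  have l2: "1 \<le> l^2" using l1 by (simp add: power2_eq_square Suc_le_eq)
  show ?case
  proof (cases "\<exists>A. A \<subseteq> E \<and> A \<noteq> {} \<and> A \<noteq> E \<and> sep A")
    case True
    then obtain A where A: "A \<subseteq> E" "A \<noteq> {}" "A \<noteq> E" "sep A" by blast
    have B: "E - A \<subseteq> E" by blast
    have cA: "card A < card E" using psubset_card_mono[OF finE] A by blast
    have cB: "card (E - A) < card E" using psubset_card_mono[OF finE] A by blast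
    have mA: "matroid A (res_I I A)" using res_matroid[OF A(1)] .
    have mB: "matroid (E - A) (res_I I (E - A))" using res_matroid[OF B] .
    have ccA: "\<forall>C. circuit A (res_I I A) C \<longrightarrow> card C \<le> l" using res_circ[OF A(1)] circl by blast
    have ccB: "\<forall>C. circuit (E - A) (res_I I (E - A)) C \<longrightarrow> card C \<le> l" using res_circ[OF B] circl by blast
    obtain V1 f1 where l1': "ldd A (res_I I A) V1 f1 (l^2)" using less(1)[OF cA mA ccA] by blast
    obtain V2 f2 where l2': "ldd (E - A) (res_I I (E - A)) V2 f2 (l^2)" using less(1)[OF cB mB ccB] by blast
    show ?thesis using glue[OF less(2) A(1) A(4) l1' l2'] .
  next
    case nosep0: False
    have nosep: "\<forall>A. A \<subseteq> E \<and> A \<noteq> {} \<and> A \<noteq> E \<longrightarrow> \<not> sep A" using nosep0 by blast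
    show ?thesis
    proof (cases "\<exists>C. circ C \<and> 2 \<le> card C")
      case True
      then obtain C1 where C1: "circ C1" "2 \<le> card C1" by blast
      obtain C0 where C0: "circ C0" and mn: "\<forall>Y. circ Y \<longrightarrow> card E - card C0 \<le> card E - card Y"
        using ex_has_least_nat[of circ C1 "\<lambda>C. card E - card C"] C1(1) by blast
      have cle: "\<And>Y. circ Y \<Longrightarrow> card Y \<le> card E" using card_mono[OF finE] circ_sub by blast
      have Cmax: "\<forall>Y. circ Y \<longrightarrow> card Y \<le> card C0"
      proof (intro allI impI)
        fix Y assume Y: "circ Y"
        show "card Y \<le> card C0" using mn Y cle[OF Y] cle[OF C0] by fastforce
      qed
      have c2: "2 \<le> card C0" using Cmax C1 by fastforce
      have cl: "card C0 \<le> l" using circl C0 by blast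
      have C0E: "C0 \<subseteq> E" using circ_sub[OF C0] .
      obtain J where J: "J \<subseteq> C0" "I J" "card J = r C0" using rank_ex[OF C0E] by blast
      have m': "matroid (E - C0) (contr_I E I C0 J)" using contr_matroid[OF C0E J(1,2)] .
      have cc': "\<forall>D. circuit (E - C0) (contr_I E I C0 J) D \<longrightarrow> card D \<le> l - 1"
        using key[OF nosep C0 Cmax J] cl by fastforce
      have lt: "l - 1 < l" using l1 by simp
      have l1'': "1 \<le> l - 1" using c2 cl by simp
      obtain V f where lv: "ldd (E - C0) (contr_I E I C0 J) V f ((l - 1)^2)"
        using IH[OF lt l1'' m' cc'] by blast
      obtain V' f' where lv': "ldd E I V' f' ((l - 1)^2 + r C0)"
        using stack[OF less(2) C0E J lv] by blast
      have "r C0 \<le> l - 1" using circ_rank[OF C0] cl by simp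
      hence "(l - 1)^2 + r C0 \<le> l^2" using sq_step[OF l1] by linarith
      thus ?thesis using ldd_mono[OF lv'] by blast
    next
      case False
      have small: "\<forall>C. circ C \<longrightarrow> card C \<le> 1" using False by fastforce
      have cE: "card E \<le> 1"
      proof (rule ccontr)
        assume "\<not> card E \<le> 1"
        hence "2 \<le> card E" by simp
        then obtain e e' where ee: "e \<in> E" "e' \<in> E" "e \<noteq> e'"
          by (metis One_nat_def card_le_Suc0_iff_eq not_less_eq_eq numeral_2_eq_2 finE)
        have sA: "sep {e}" unfolding sep_def
        proof (intro allI impI)
          fix Y assume Y: "circ Y"
          have "card Y \<le> 1" using small Y by blast
          moreover have "Y \<noteq> {}" using circ_ne[OF Y] .
          moreover have "finite Y" using circ_fin[OF Y] .
          ultimately obtain y where y: "Y = {y}" by (metis card_1_singletonE card_0_eq le_neq_implies_less less_one)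
          have "y \<in> E" using circ_sub[OF Y] y by blast
          thus "Y \<subseteq> {e} \<or> Y \<subseteq> E - {e}" using y by blast
        qed
        have "{e} \<subseteq> E" "{e} \<noteq> {}" "{e} \<noteq> E" using ee by auto
        thus False using nosep sA by blast
      qed
      obtain J where J: "J \<subseteq> E" "I J" "card J = r E" using rank_ex[OF order_refl] by blast
      define I0 where "I0 = contr_I E I E J"
      have l0: "ldd (E - E) I0 {[]} (\<lambda>_. []) 0"
        unfolding ldd_def
      proof (intro conjI allI impI ballI)
        show "ltree {[]}" unfolding ltree_def by simp
      next
        fix x assume "x \<in> E - E" thus "[] \<in> {[]}" by simp
      next
        have "mrank I0 {} = r ({} \<union> E) - r E" unfolding I0_def using contr_rank[OF order_refl J] by blast
        thus "mrank I0 (E - E) = card {[]::nat list} - 1" by simp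
      next
        fix X assume "X \<subseteq> E - E"
        hence X: "X = {}" by blast
        have "mrank I0 {} = r ({} \<union> E) - r E" unfolding I0_def using contr_rank[OF order_refl J] by blast
        thus "mrank I0 X \<le> card (lstar (\<lambda>_. []) X) - 1" using X by simp
      next
        fix v :: "nat list" assume "v \<in> {[]}" thus "length v \<le> 0" by simp
      qed
      obtain V' f' where lv': "ldd E I V' f' (0 + r E)"
        using stack[OF less(2) order_refl J] l0 unfolding I0_def by blast
      have "r E \<le> card E" using rank_le_card[OF order_refl] .
      hence "0 + r E \<le> l^2" using cE l2 by simp
      thus ?thesis using ldd_mono[OF lv'] by blast
    qed
  qed
qed

lemma main: "1 \<le> l \<Longrightarrow> matroid E I \<Longrightarrow> (\<forall>C. circuit E I C \<longrightarrow> card C \<le> l) \<Longrightarrow> \<exists>V f. ldd E I V f (l^2)"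
proof (induction l arbitrary: E I rule: less_induct)
  case (less l)
  show ?case using main_step[of l E I] less by blast
qed

theorem mainTheorem16:
  fixes E :: "'a set" and indep :: "'a set \<Rightarrow> bool"
  assumes "matroid E indep"
    and "\<exists>C. circuit E indep C"
  shows "branch_depth E indep \<le> (max_circuit_size E indep)\<^sup>2"
proof -
  interpret mat E indep using assms(1) by unfold_locales
  obtain C0 where C0: "circ C0" using assms(2) by blast
  define S where "S = {card C | C. circuit E indep C}"
  have fS: "finite S"
  proof -
    have "S \<subseteq> card ` Pow E" unfolding S_def using circ_sub by blast
    thus ?thesis using finite_subset finE by blast
  qed
  have inS: "card C0 \<in> S" unfolding S_def using C0 by blast
  have all: "\<forall>C. circ C \<longrightarrow> card C \<le> max_circuit_size E indep"
  proof (intro allI impI)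
    fix C assume "circ C"
    hence "card C \<in> S" unfolding S_def by blast
    thus "card C \<le> max_circuit_size E indep" unfolding max_circuit_size_def S_def[symmetric]
      using Max_ge[OF fS] by blast
  qed
  have "1 \<le> card C0" using circ_card_pos[OF C0] .
  hence l1: "1 \<le> max_circuit_size E indep" using all C0 by fastforce
  obtain V f where "ldd E indep V f ((max_circuit_size E indep)^2)"
    using main[OF l1 assms(1) all] by blast
  thus ?thesis using ldd_bd by blast
qed


end
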